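(* Let $\boldsymbol x^*$ be a pure Nash equilibrium of $\mathcal L(n,S)$ satisfying the vertex property. Then there exists $\xi>0$ such that for every $\boldsymbol x^*$-saturated location $w$ and every edge $e$ incident on $w$, we have $\delta(w,e)=\xi$. Moreover, every player located at an $\boldsymbol x^*$-saturated location has payoff $\xi$.
   Context: Network: $(V,E)$ is a finite connected graph with no vertex of degree $2$; each edge $e$ has a length $\lambda(e)>0$. $S$ is the metric measure space obtained by identifying each edge with a segment of length $\lambda(e)$, with length measure $\lambda$ and shortest-path distance $d$. Vertices have their graph degree, and interior points of edges have degree $2$. If $w$ is an interior point of an edge, that edge is regarded as split at $w$ into two edges incident on $w$. Location game $\mathcal L(n,S)$: $n$ players each choose a point of $S$. Consumers are distributed according to $\lambda$, and each shops at a closest occupied location. Consumers equidistant from several closest occupied locations are split equally among those locations, and the share of a location is split equally among the players located there. Payoff is the mass of consumers attracted. Nash equilibria are pure. Vertex property: every vertex of degree $\ge3$ is occupied. $w$ is $\boldsymbol x$-saturated if $\operatorname{card}\{i:x_i=w\}=\operatorname{degree}(w)$. For an occupied point $w$ and an edge $e$ incident on $w$: - If the other endpoint of $e$ is a leaf and no player lies on $e$ except at $w$, then $\delta(w,e)=\lambda(e)$. - Otherwise, $\delta(w,e)=d(w,c(e))/2$, where $c(e)$ is the location of the closest player to $w$ on $e$ other than at $w$. Thus $\delta(w,e)$ is the mass of consumers on $e$ served by location $w$. *)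

theory Defs
  imports "HOL-Analysis.Analysis"
begin

text \<open>A point of S is either a vertex Vx v, or an interior point Ip e t of edge e at
  coordinate t (0 < t < len e) measured from the endpoint fst (ends e).\<close>

datatype ('v,'e) point = Vx 'v | Ip 'e real

definition vdeg :: "'e set \<Rightarrow> ('e \<Rightarrow> 'v \<times> 'v) \<Rightarrow> 'v \<Rightarrow> nat" where
  "vdeg E ends v = card {e\<in>E. v = fst (ends e) \<or> v = snd (ends e)}"

inductive walk :: "'v set \<Rightarrow> 'e set \<Rightarrow> ('e \<Rightarrow> 'v \<times> 'v) \<Rightarrow> ('e \<Rightarrow> real) \<Rightarrow> 'v \<Rightarrow> real \<Rightarrow> 'v \<Rightarrow> bool"
  for V E ends len where
  wnil: "v \<in> V \<Longrightarrow> walk V E ends len v 0 v"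
| wcons: "e \<in> E \<Longrightarrow> (ends e = (a, b) \<or> ends e = (b, a)) \<Longrightarrow> walk V E ends len b l c
           \<Longrightarrow> walk V E ends len a (len e + l) c"

definition network :: "'v set \<Rightarrow> 'e set \<Rightarrow> ('e \<Rightarrow> 'v \<times> 'v) \<Rightarrow> ('e \<Rightarrow> real) \<Rightarrow> bool" where
  "network V E ends len \<longleftrightarrow> finite V \<and> V \<noteq> {} \<and> finite E \<and>
     (\<forall>e\<in>E. fst (ends e) \<in> V \<and> snd (ends e) \<in> V \<and> fst (ends e) \<noteq> snd (ends e) \<and> len e > 0) \<and>
     inj_on (\<lambda>e. {fst (ends e), snd (ends e)}) E \<and>
     (\<forall>u\<in>V. \<forall>v\<in>V. \<exists>l. walk V E ends len u l v) \<and>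
     (\<forall>v\<in>V. vdeg E ends v \<noteq> 2)"

fun valid_pt :: "'v set \<Rightarrow> 'e set \<Rightarrow> ('e \<Rightarrow> real) \<Rightarrow> ('v,'e) point \<Rightarrow> bool" where
  "valid_pt V E len (Vx v) = (v \<in> V)"
| "valid_pt V E len (Ip e t) = (e \<in> E \<and> 0 < t \<and> t < len e)"

fun pdeg :: "'e set \<Rightarrow> ('e \<Rightarrow> 'v \<times> 'v) \<Rightarrow> ('v,'e) point \<Rightarrow> nat" where
  "pdeg E ends (Vx v) = vdeg E ends v"
| "pdeg E ends (Ip e t) = 2"

definition dV :: "'v set \<Rightarrow> 'e set \<Rightarrow> ('e \<Rightarrow> 'v \<times> 'v) \<Rightarrow> ('e \<Rightarrow> real) \<Rightarrow> 'v \<Rightarrow> 'v \<Rightarrow> real" where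
  "dV V E ends len u v = Inf {l. walk V E ends len u l v}"

fun anchors :: "('e \<Rightarrow> 'v \<times> 'v) \<Rightarrow> ('e \<Rightarrow> real) \<Rightarrow> ('v,'e) point \<Rightarrow> ('v \<times> real) set" where
  "anchors ends len (Vx v) = {(v, 0)}"
| "anchors ends len (Ip e t) = {(fst (ends e), t), (snd (ends e), len e - t)}"

definition pdist :: "'v set \<Rightarrow> 'e set \<Rightarrow> ('e \<Rightarrow> 'v \<times> 'v) \<Rightarrow> ('e \<Rightarrow> real) \<Rightarrow> ('v,'e) point \<Rightarrow> ('v,'e) point \<Rightarrow> real" where
  "pdist V E ends len p q = Min
     ({a + dV V E ends len u v + b | u a v b. (u, a) \<in> anchors ends len p \<and> (v, b) \<in> anchors ends len q}
      \<union> (case (p, q) of (Ip e t, Ip e' s) \<Rightarrow> (if e = e' then {\<bar>t - s\<bar>} else {}) | _ \<Rightarrow> {}))"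

definition closest :: "'v set \<Rightarrow> 'e set \<Rightarrow> ('e \<Rightarrow> 'v \<times> 'v) \<Rightarrow> ('e \<Rightarrow> real) \<Rightarrow> nat \<Rightarrow> (nat \<Rightarrow> ('v,'e) point) \<Rightarrow> ('v,'e) point \<Rightarrow> ('v,'e) point set" where
  "closest V E ends len n x y =
     (let m = Min {pdist V E ends len y (x j) | j. j < n}
      in {x j | j. j < n \<and> pdist V E ends len y (x j) = m})"

definition share :: "'v set \<Rightarrow> 'e set \<Rightarrow> ('e \<Rightarrow> 'v \<times> 'v) \<Rightarrow> ('e \<Rightarrow> real) \<Rightarrow> nat \<Rightarrow> (nat \<Rightarrow> ('v,'e) point) \<Rightarrow> nat \<Rightarrow> ('v,'e) point \<Rightarrow> real" where
  "share V E ends len n x i y =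
     (if x i \<in> closest V E ends len n x y
      then (1 / real (card (closest V E ends len n x y))) * (1 / real (card {j. j < n \<and> x j = x i}))
      else 0)"

definition payoff :: "'v set \<Rightarrow> 'e set \<Rightarrow> ('e \<Rightarrow> 'v \<times> 'v) \<Rightarrow> ('e \<Rightarrow> real) \<Rightarrow> nat \<Rightarrow> (nat \<Rightarrow> ('v,'e) point) \<Rightarrow> nat \<Rightarrow> real" where
  "payoff V E ends len n x i = (\<Sum>e\<in>E. integral {0..len e} (\<lambda>t. share V E ends len n x i (Ip e t)))"

definition nash :: "'v set \<Rightarrow> 'e set \<Rightarrow> ('e \<Rightarrow> 'v \<times> 'v) \<Rightarrow> ('e \<Rightarrow> real) \<Rightarrow> nat \<Rightarrow> (nat \<Rightarrow> ('v,'e) point) \<Rightarrow> bool" where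
  "nash V E ends len n x \<longleftrightarrow> (\<forall>i<n. valid_pt V E len (x i)) \<and>
     (\<forall>i<n. \<forall>p. valid_pt V E len p \<longrightarrow>
        payoff V E ends len n (x(i := p)) i \<le> payoff V E ends len n x i)"

definition vertex_property :: "'v set \<Rightarrow> 'e set \<Rightarrow> ('e \<Rightarrow> 'v \<times> 'v) \<Rightarrow> nat \<Rightarrow> (nat \<Rightarrow> ('v,'e) point) \<Rightarrow> bool" where
  "vertex_property V E ends n x \<longleftrightarrow> (\<forall>v\<in>V. vdeg E ends v \<ge> 3 \<longrightarrow> (\<exists>i<n. x i = Vx v))"

definition saturated :: "'v set \<Rightarrow> 'e set \<Rightarrow> ('e \<Rightarrow> 'v \<times> 'v) \<Rightarrow> ('e \<Rightarrow> real) \<Rightarrow> nat \<Rightarrow> (nat \<Rightarrow> ('v,'e) point) \<Rightarrow> ('v,'e) point \<Rightarrow> bool" where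
  "saturated V E ends len n x w \<longleftrightarrow> valid_pt V E len w \<and> card {i. i < n \<and> x i = w} = pdeg E ends w"

text \<open>Edges incident on w (after splitting at interior w): a pair (e, b) is the part of
  edge e starting at w and heading towards endpoint snd (ends e) if b, fst (ends e) otherwise.\<close>
definition dirs :: "'e set \<Rightarrow> ('e \<Rightarrow> 'v \<times> 'v) \<Rightarrow> ('v,'e) point \<Rightarrow> ('e \<times> bool) set" where
  "dirs E ends w = (case w of
      Vx v \<Rightarrow> {(e, v = fst (ends e)) | e. e \<in> E \<and> (v = fst (ends e) \<or> v = snd (ends e))}
    | Ip e t \<Rightarrow> {(e, True), (e, False)})"

definition coord :: "('e \<Rightarrow> 'v \<times> 'v) \<Rightarrow> ('e \<Rightarrow> real) \<Rightarrow> ('v,'e) point \<Rightarrow> 'e \<Rightarrow> real" where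
  "coord ends len w e = (case w of Vx v \<Rightarrow> (if v = fst (ends e) then 0 else len e) | Ip e' t \<Rightarrow> t)"

definition farv :: "('e \<Rightarrow> 'v \<times> 'v) \<Rightarrow> 'e \<Rightarrow> bool \<Rightarrow> 'v" where
  "farv ends e b = (if b then snd (ends e) else fst (ends e))"

definition farc :: "('e \<Rightarrow> real) \<Rightarrow> 'e \<Rightarrow> bool \<Rightarrow> real" where
  "farc len e b = (if b then len e else 0)"

definition on_seg :: "('e \<Rightarrow> 'v \<times> 'v) \<Rightarrow> ('e \<Rightarrow> real) \<Rightarrow> ('v,'e) point \<Rightarrow> 'e \<Rightarrow> bool \<Rightarrow> ('v,'e) point \<Rightarrow> bool" where
  "on_seg ends len w e b q \<longleftrightarrow> q = Vx (farv ends e b) \<or>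
     (\<exists>s. q = Ip e s \<and> (if b then coord ends len w e < s \<and> s < len e else 0 < s \<and> s < coord ends len w e))"

definition delta :: "'v set \<Rightarrow> 'e set \<Rightarrow> ('e \<Rightarrow> 'v \<times> 'v) \<Rightarrow> ('e \<Rightarrow> real) \<Rightarrow> nat \<Rightarrow> (nat \<Rightarrow> ('v,'e) point) \<Rightarrow> ('v,'e) point \<Rightarrow> 'e \<times> bool \<Rightarrow> real" where
  "delta V E ends len n x w eb = (case eb of (e, b) \<Rightarrow>
     (let P = {j. j < n \<and> on_seg ends len w e b (x j)} in
      if vdeg E ends (farv ends e b) = 1 \<and> P = {}
      then \<bar>farc len e b - coord ends len w e\<bar>
      else Min {pdist V E ends len w (x j) | j. j \<in> P} / 2))"

end

theory Submission
  imports Defs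
begin


locale net =
  fixes V :: "'v set" and E :: "'e set" and ends :: "'e \<Rightarrow> 'v \<times> 'v" and len :: "'e \<Rightarrow> real"
  assumes netw: "network V E ends len"
begin

abbreviation "wk \<equiv> walk V E ends len"
abbreviation "dv \<equiv> dV V E ends len"

lemma finE: "finite E" and finV: "finite V" using netw by (auto simp: network_def)

lemma edge_facts: assumes "e \<in> E"
  shows "fst (ends e) \<in> V" "snd (ends e) \<in> V" "fst (ends e) \<noteq> snd (ends e)" "len e > 0"
  using netw assms by (auto simp: network_def)

lemma conn: "u \<in> V \<Longrightarrow> v \<in> V \<Longrightarrow> \<exists>l. wk u l v"
  using netw by (auto simp: network_def)

lemma walk_V: "wk a l b \<Longrightarrow> a \<in> V \<and> b \<in> V"
proof (induction rule: walk.induct)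
  case (wnil v) then show ?case by simp
next
  case (wcons e a b l c)
  then show ?case using edge_facts[OF wcons(1)] by auto
qed

lemma walk_nonneg: "wk a l b \<Longrightarrow> l \<ge> 0"
proof (induction rule: walk.induct)
  case (wnil v) then show ?case by simp
next
  case (wcons e a b l c)
  then show ?case using edge_facts[OF wcons(1)] by auto
qed

lemma walk_append: "wk a l1 b \<Longrightarrow> wk b l2 c \<Longrightarrow> wk a (l1 + l2) c"
proof (induction rule: walk.induct)
  case (wnil v) then show ?case by simp
next
  case (wcons e a b l c')
  then have "wk a (len e + (l + l2)) c" by (intro walk.wcons) auto
  then show ?case by (simp add: add.assoc)
qed

lemma walk_edge: "e \<in> E \<Longrightarrow> ends e = (a, b) \<or> ends e = (b, a) \<Longrightarrow> wk a (len e) b"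
proof -
  assume e: "e \<in> E" and ab: "ends e = (a, b) \<or> ends e = (b, a)"
  have "b \<in> V" using edge_facts[OF e] ab by auto
  then have "wk b 0 b" by (rule walk.wnil)
  from walk.wcons[OF e ab this] show ?thesis by simp
qed

lemma walk_rev: "wk a l b \<Longrightarrow> wk b l a"
proof (induction rule: walk.induct)
  case (wnil v) then show ?case by (rule walk.wnil)
next
  case (wcons e a b l c)
  have "wk b (len e) a" using walk_edge[OF wcons(1)] wcons(2) by auto
  from walk_append[OF wcons(4) this] show ?case by (simp add: add.commute)
qed

lemma walk_first:
  assumes "wk a l b" "a \<noteq> b"
  shows "\<exists>e c l'. e \<in> E \<and> (ends e = (a, c) \<or> ends e = (c, a)) \<and> wk c l' b \<and> l = len e + l'"
  using assms by (cases rule: walk.cases) auto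

lemma walk_set_ne: "u \<in> V \<Longrightarrow> v \<in> V \<Longrightarrow> {l. wk u l v} \<noteq> {}"
  using conn by auto

lemma walk_set_bdd: "bdd_below {l. wk u l v}"
  using walk_nonneg by (auto intro: bdd_belowI[of _ 0])

lemma dV_le: "wk u l v \<Longrightarrow> dv u v \<le> l"
  unfolding dV_def by (rule cInf_lower) (auto intro: walk_set_bdd)

lemma dV_ge: "u \<in> V \<Longrightarrow> v \<in> V \<Longrightarrow> (\<And>l. wk u l v \<Longrightarrow> c \<le> l) \<Longrightarrow> c \<le> dv u v"
  unfolding dV_def by (rule cInf_greatest) (use walk_set_ne in auto)

lemma dV_nonneg: "u \<in> V \<Longrightarrow> v \<in> V \<Longrightarrow> 0 \<le> dv u v"
  by (rule dV_ge) (auto dest: walk_nonneg)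

lemma dV_refl: "u \<in> V \<Longrightarrow> dv u u = 0"
  using dV_le[OF walk.wnil] dV_nonneg by force

lemma dV_sym: "u \<in> V \<Longrightarrow> v \<in> V \<Longrightarrow> dv u v = dv v u"
  by (rule antisym; rule dV_ge) (auto intro: dV_le walk_rev)

lemma dV_approx:
  assumes "u \<in> V" "v \<in> V" "\<eta> > 0"
  shows "\<exists>l. wk u l v \<and> l < dv u v + \<eta>"
proof -
  have "Inf {l. wk u l v} < dv u v + \<eta>" using assms by (simp add: dV_def)
  from cInf_lessD[OF walk_set_ne[OF assms(1,2)] this] show ?thesis by auto
qed

lemma dV_edge: "e \<in> E \<Longrightarrow> ends e = (a, b) \<or> ends e = (b, a) \<Longrightarrow> dv a b \<le> len e"
  by (rule dV_le, rule walk_edge)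

lemma dV_trans_walk: "wk u l v \<Longrightarrow> w \<in> V \<Longrightarrow> dv u w \<le> l + dv v w"
proof -
  assume wl: "wk u l v" and w: "w \<in> V"
  have v: "v \<in> V" using walk_V[OF wl] by auto
  show ?thesis
  proof (rule ccontr)
    assume "\<not> ?thesis"
    then have "dv v w < dv u w - l" by simp
    then obtain l' where "wk v l' w" "l' < dv u w - l"
      using dV_approx[OF v w, of "dv u w - l - dv v w"] by auto
    with walk_append[OF wl this(1)] dV_le show False by fastforce
  qed
qed

definition inc :: "'e \<Rightarrow> 'v \<Rightarrow> bool" where "inc e z \<longleftrightarrow> z = fst (ends e) \<or> z = snd (ends e)"

lemma leaf_unique:
  assumes "vdeg E ends z = 1" "e \<in> E" "inc e z" "e' \<in> E" "inc e' z"
  shows "e' = e"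
proof -
  have "card {e\<in>E. z = fst (ends e) \<or> z = snd (ends e)} = 1" using assms(1) by (simp add: vdeg_def)
  then obtain e0 where "{e\<in>E. z = fst (ends e) \<or> z = snd (ends e)} = {e0}" by (auto simp: card_Suc_eq)
  moreover have "e \<in> {e\<in>E. z = fst (ends e) \<or> z = snd (ends e)}" "e' \<in> {e\<in>E. z = fst (ends e) \<or> z = snd (ends e)}"
    using assms(2-5) by (auto simp: inc_def)
  ultimately show ?thesis by auto
qed

lemma walk_from_leaf:
  assumes "vdeg E ends z = 1" "e \<in> E" "ends e = (z, ob) \<or> ends e = (ob, z)" "wk z l u" "u \<noteq> z"
  shows "\<exists>l'. wk ob l' u \<and> l = len e + l'"
proof -
  obtain e1 c l' where e1: "e1 \<in> E" "ends e1 = (z, c) \<or> ends e1 = (c, z)" "wk c l' u" "l = len e1 + l'"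
    using walk_first[OF assms(4) assms(5)[symmetric]] by blast
  have "e1 = e" using leaf_unique[OF assms(1,2) _ e1(1)] assms(3) e1(2) by (auto simp: inc_def)
  moreover have "c = ob" using e1(2) assms(3) edge_facts(3)[OF assms(2)] \<open>e1 = e\<close> by auto
  ultimately show ?thesis using e1 by auto
qed

lemma dV_leaf:
  assumes "vdeg E ends z = 1" "e \<in> E" "ends e = (z, ob) \<or> ends e = (ob, z)" "u \<in> V" "u \<noteq> z"
  shows "len e + dv ob u \<le> dv z u"
proof (rule dV_ge)
  show "z \<in> V" using edge_facts[OF assms(2)] assms(3) by auto
  show "u \<in> V" by fact
  fix l assume "wk z l u"
  then obtain l' where "wk ob l' u" "l = len e + l'" using walk_from_leaf[OF assms(1-3) _ assms(5)] by blast
  then show "len e + dv ob u \<le> l" using dV_le by auto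
qed

lemma dV_pos:
  assumes "u \<in> V" "v \<in> V" "u \<noteq> v"
  shows "0 < dv u v"
proof -
  obtain l0 where "wk u l0 v" using conn assms by blast
  then obtain e0 c0 l0' where "e0 \<in> E" using walk_first[OF _ assms(3)] by blast
  then have Ene: "E \<noteq> {}" by auto
  define m where "m = Min (len ` E)"
  have mpos: "m > 0" unfolding m_def using finE Ene edge_facts(4) by (auto simp: Min_gr_iff)
  have "m \<le> dv u v"
  proof (rule dV_ge[OF assms(1,2)])
    fix l assume "wk u l v"
    then obtain e c l' where "e \<in> E" "wk c l' v" "l = len e + l'" using walk_first[OF _ assms(3)] by blast
    then show "m \<le> l" unfolding m_def using finE walk_nonneg[of c l' v]
      by (smt (verit) Min_le imageI finite_imageI)
  qed
  then show ?thesis using mpos by simp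
qed

end

context net begin

abbreviation "pd \<equiv> pdist V E ends len"

definition Dq :: "'v \<Rightarrow> ('v,'e) point \<Rightarrow> real" where
  "Dq u q = (case q of Vx v \<Rightarrow> dv u v
      | Ip e s \<Rightarrow> min (dv u (fst (ends e)) + s) (dv u (snd (ends e)) + (len e - s)))"

lemma anch_set: "{a + dv u v + b | u a v b. (u, a) \<in> A \<and> (v, b) \<in> B}
   = (\<lambda>(p1, p2). snd p1 + dv (fst p1) (fst p2) + snd p2) ` (A \<times> B)"
  by (auto simp: image_iff) force+

lemma mdl: "(a::real) + min b c = min (a+b) (a+c)" by (simp add: min_def)

lemma pd_Vx: "pd (Vx v) q = Dq v q"
proof (cases q)
  case (Vx v')
  then show ?thesis unfolding pdist_def anch_set by (simp add: Dq_def)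
next
  case (Ip e s)
  then show ?thesis unfolding pdist_def anch_set by (simp add: Dq_def)
qed

lemma pd_Ip_Vx: "pd (Ip e t) (Vx v) = min (t + Dq (fst (ends e)) (Vx v)) (len e - t + Dq (snd (ends e)) (Vx v))"
  unfolding pdist_def anch_set by (simp add: Dq_def Times_insert_left)

lemma pd_Ip_Ip: "pd (Ip e t) (Ip e' s) = (let X = min (t + Dq (fst (ends e)) (Ip e' s)) (len e - t + Dq (snd (ends e)) (Ip e' s)) in
    if e' = e then min X \<bar>t - s\<bar> else X)"
  unfolding pdist_def anch_set apply (simp add: Dq_def Times_insert_left Let_def)
  apply (simp add: mdl min.assoc algebra_simps)
  done

lemma pd_Ip: "pd (Ip e t) q = (let X = min (t + Dq (fst (ends e)) q) (len e - t + Dq (snd (ends e)) q) in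
   case q of Ip e' s \<Rightarrow> if e' = e then min X \<bar>t - s\<bar> else X | Vx _ \<Rightarrow> X)"
  by (cases q) (simp_all add: pd_Ip_Vx pd_Ip_Ip Let_def)

lemma pt_V: "valid_pt V E len q \<Longrightarrow> (u, a) \<in> anchors ends len q \<Longrightarrow> u \<in> V"
  by (cases q) (auto dest: edge_facts)

lemma Dq_nonneg: "u \<in> V \<Longrightarrow> valid_pt V E len q \<Longrightarrow> 0 \<le> Dq u q"
  by (cases q) (auto simp: Dq_def intro!: dV_nonneg add_nonneg_nonneg dest: edge_facts)

lemma pd_Vx_nonneg: "valid_pt V E len p \<Longrightarrow> valid_pt V E len q \<Longrightarrow> 0 \<le> pd p q"
proof (cases p)
  case (Vx v)
  assume "valid_pt V E len p" "valid_pt V E len q"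
  then show ?thesis using Vx by (simp add: pd_Vx Dq_nonneg)
next
  case (Ip e t)
  assume a: "valid_pt V E len p" "valid_pt V E len q"
  then have "0 \<le> Dq (fst (ends e)) q" "0 \<le> Dq (snd (ends e)) q" "t \<le> len e" "0 \<le> t"
    using Ip by (auto intro!: Dq_nonneg dest: edge_facts)
  then show ?thesis using Ip by (cases q) (auto simp: pd_Ip Let_def)
qed

lemma pd_self: "valid_pt V E len p \<Longrightarrow> pd p p = 0"
proof (cases p)
  case (Vx v)
  assume "valid_pt V E len p" then show ?thesis using Vx by (simp add: pd_Vx Dq_def dV_refl)
next
  case (Ip e t)
  assume a: "valid_pt V E len p"
  have "0 \<le> pd p p" using pd_Vx_nonneg[OF a a] .
  moreover have "pd p p \<le> 0" using Ip by (simp add: pd_Ip Let_def)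
  ultimately show ?thesis by simp
qed

end

context net begin

definition "sl w e b = \<bar>farc len e b - coord ends len w e\<bar>"
definition "nl w e b = \<bar>farc len e (\<not> b) - coord ends len w e\<bar>"
definition "pos w e b s = (if b then coord ends len w e + s else coord ends len w e - s)"
definition "sgd w e b u = (if b then u - coord ends len w e else coord ends len w e - u)"
definition "alongd w e b q = (case q of Vx _ \<Rightarrow> sl w e b | Ip _ u \<Rightarrow> sgd w e b u)"

lemma dirs_iff: "(e, b) \<in> dirs E ends w \<longleftrightarrow>
   (\<exists>v. w = Vx v \<and> e \<in> E \<and> inc e v \<and> b = (v = fst (ends e))) \<or> (\<exists>t. w = Ip e t)"
  by (cases w) (auto simp: dirs_def inc_def)

lemma finite_dirs: "finite (dirs E ends w)"
proof (cases w)
  case (Vx v)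
  have "dirs E ends w = (\<lambda>e. (e, v = fst (ends e))) ` {e\<in>E. v = fst (ends e) \<or> v = snd (ends e)}"
    using Vx by (auto simp: dirs_def)
  then show ?thesis using finE by simp
next
  case (Ip e t) then show ?thesis by (simp add: dirs_def)
qed

lemma card_dirs: "valid_pt V E len w \<Longrightarrow> card (dirs E ends w) = pdeg E ends w"
proof (cases w)
  case (Vx v)
  have "dirs E ends w = (\<lambda>e. (e, v = fst (ends e))) ` {e\<in>E. v = fst (ends e) \<or> v = snd (ends e)}"
    using Vx by (auto simp: dirs_def)
  moreover have "inj_on (\<lambda>e. (e, v = fst (ends e))) X" for X by (auto simp: inj_on_def)
  ultimately show ?thesis using Vx by (simp add: card_image vdeg_def)
next
  case (Ip e t) then show ?thesis by (simp add: dirs_def)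
qed

context
  fixes w e b
  assumes vw: "valid_pt V E len w" and dw: "(e, b) \<in> dirs E ends w"
begin

lemma eE: "e \<in> E"
  using dw vw by (auto simp: dirs_iff)

lemma coord_rng: "0 \<le> coord ends len w e" "coord ends len w e \<le> len e"
  using dw vw edge_facts(4)[OF eE] by (auto simp: dirs_iff coord_def)

lemma DF: "0 < sl w e b" "0 \<le> nl w e b" "sl w e b + nl w e b = len e"
  "farv ends e b \<noteq> farv ends e (\<not> b)" "farv ends e b \<in> V" "farv ends e (\<not> b) \<in> V"
  "inc e (farv ends e b)" "inc e (farv ends e (\<not> b))"
  using dw vw edge_facts[OF eE] coord_rng
  by (auto simp: dirs_iff coord_def sl_def nl_def farc_def farv_def inc_def)

lemma DF_Vx: "w = Vx v \<Longrightarrow> v = farv ends e (\<not> b) \<and> nl w e b = 0 \<and> \<not> inc e' v \<longrightarrow> e' \<noteq> e"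
  using dw vw edge_facts[OF eE]
  by (auto simp: dirs_iff coord_def sl_def nl_def farc_def farv_def inc_def)

lemma DF_Vx': "w = Vx v \<Longrightarrow> v = farv ends e (\<not> b) \<and> nl w e b = 0"
  using dw vw edge_facts[OF eE]
  by (auto simp: dirs_iff coord_def sl_def nl_def farc_def farv_def inc_def)

lemma DF_Ip: "w = Ip e' t \<Longrightarrow> e' = e \<and> nl w e b > 0 \<and> coord ends len w e = t"
  using dw vw edge_facts[OF eE]
  by (auto simp: dirs_iff coord_def sl_def nl_def farc_def farv_def inc_def)

lemma pos_sig: "pos w e b (sgd w e b u) = u" "sgd w e b (pos w e b s) = s"
  by (auto simp: pos_def sgd_def)

lemma pt_valid: "0 < s \<Longrightarrow> s < sl w e b \<Longrightarrow> valid_pt V E len (Ip e (pos w e b s))"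
  using coord_rng eE by (auto simp: pos_def sl_def farc_def)

lemma PT: "pd (Ip e (pos w e b s)) q = (let X = min (nl w e b + s + Dq (farv ends e (\<not> b)) q)
      (sl w e b - s + Dq (farv ends e b) q) in
   case q of Ip e' u \<Rightarrow> if e' = e then min X \<bar>s - sgd w e b u\<bar> else X | Vx _ \<Rightarrow> X)"
proof (cases b)
  case True
  then show ?thesis using coord_rng
    by (cases q) (simp_all add: pd_Ip pos_def sl_def nl_def farc_def farv_def sgd_def algebra_simps Let_def)
next
  case False
  then show ?thesis using coord_rng
    by (cases q) (simp_all add: pd_Ip pos_def sl_def nl_def farc_def farv_def sgd_def algebra_simps min.commute Let_def abs_minus_commute)
qed

lemma Dq_same: "Dq y (Ip e u) = min (dv y (farv ends e (\<not> b)) + (nl w e b + sgd w e b u))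
     (dv y (farv ends e b) + (sl w e b - sgd w e b u))"
  using coord_rng
  by (cases b) (auto simp: Dq_def sl_def nl_def farc_def farv_def sgd_def algebra_simps min.commute Let_def abs_minus_commute)

lemma Dq_w: "y \<in> V \<Longrightarrow> min (dv y (farv ends e (\<not> b)) + nl w e b) (dv y (farv ends e b) + sl w e b) \<le> Dq y w"
proof (cases w)
  case (Vx v)
  then show ?thesis using DF_Vx'[OF Vx] by (simp add: Dq_def)
next
  case (Ip e' t)
  then have "e' = e" "coord ends len w e = t" using DF_Ip by auto
  moreover have "Dq y (Ip e t) = min (dv y (farv ends e (\<not> b)) + (nl w e b + sgd w e b t))
     (dv y (farv ends e b) + (sl w e b - sgd w e b t))" by (rule Dq_same)
  ultimately show ?thesis using Ip by (simp add: sgd_def)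
qed

lemma on_seg_iff: "valid_pt V E len q \<Longrightarrow> on_seg ends len w e b q \<longleftrightarrow>
   q = Vx (farv ends e b) \<or> (\<exists>u. q = Ip e u \<and> 0 < sgd w e b u)"
  using coord_rng by (cases b; cases q) (auto simp: on_seg_def sgd_def)

lemma alongd_rng: "valid_pt V E len q \<Longrightarrow> on_seg ends len w e b q \<Longrightarrow>
    0 < alongd w e b q \<and> alongd w e b q \<le> sl w e b"
  using coord_rng DF(1) by (cases b; cases q) (auto simp: on_seg_def sgd_def alongd_def sl_def farc_def)

lemma not_seg: "valid_pt V E len (Ip e u) \<Longrightarrow> \<not> on_seg ends len w e b (Ip e u) \<Longrightarrow> sgd w e b u \<le> 0"
  using on_seg_iff[of "Ip e u"] by auto

lemma sig_lt: "valid_pt V E len (Ip e u) \<Longrightarrow> sgd w e b u < sl w e b"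
  using coord_rng by (cases b) (auto simp: sgd_def sl_def farc_def)

end
end

context net begin

context
  fixes w e b
  assumes vw: "valid_pt V E len w" and dw: "(e, b) \<in> dirs E ends w"
begin

lemma PT_ge: assumes "nl w e b + s + Dq (farv ends e (\<not> b)) q \<ge> m" "sl w e b - s + Dq (farv ends e b) q \<ge> m"
   "\<And>u. q = Ip e u \<Longrightarrow> \<bar>s - sgd w e b u\<bar> \<ge> m"
 shows "pd (Ip e (pos w e b s)) q \<ge> m"
  using assms by (cases q) (auto simp: PT[OF vw dw] Let_def)

lemma PT_le1: "pd (Ip e (pos w e b s)) q \<le> nl w e b + s + Dq (farv ends e (\<not> b)) q"
  by (cases q) (auto simp: PT[OF vw dw] Let_def)
lemma PT_le2: "pd (Ip e (pos w e b s)) q \<le> sl w e b - s + Dq (farv ends e b) q"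
  by (cases q) (auto simp: PT[OF vw dw] Let_def)
lemma PT_le3: "pd (Ip e (pos w e b s)) (Ip e u) \<le> \<bar>s - sgd w e b u\<bar>"
  by (auto simp: PT[OF vw dw] Let_def)

lemma sgd_ge: "valid_pt V E len (Ip e u) \<Longrightarrow> - nl w e b < sgd w e b u"
  using coord_rng[OF vw dw] by (cases b) (auto simp: sgd_def nl_def farc_def)

lemma ends_z: "ends e = (farv ends e b, farv ends e (\<not> b)) \<or> ends e = (farv ends e (\<not> b), farv ends e b)"
  by (cases b) (auto simp: farv_def)

lemma leaf_far:
  assumes "vdeg E ends (farv ends e b) = 1" "v \<in> V" "v \<noteq> farv ends e b"
  shows "len e \<le> dv (farv ends e b) v"
proof -
  have "len e + dv (farv ends e (\<not> b)) v \<le> dv (farv ends e b) v"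
    using dV_leaf[OF assms(1) eE[OF vw dw] ends_z assms(2,3)] .
  moreover have "0 \<le> dv (farv ends e (\<not> b)) v" using dV_nonneg DF(6)[OF vw dw] assms(2) by auto
  ultimately show ?thesis by simp
qed

lemma leaf_Dq:
  assumes "vdeg E ends (farv ends e b) = 1" "valid_pt V E len q" "\<not> on_seg ends len w e b q"
  shows "sl w e b \<le> Dq (farv ends e b) q"
proof (cases q)
  case (Vx v)
  then have "v \<noteq> farv ends e b" "v \<in> V" using assms(2,3) by (auto simp: on_seg_def)
  then have "len e \<le> dv (farv ends e b) v" using leaf_far[OF assms(1)] by auto
  then show ?thesis using DF[OF vw dw] Vx by (simp add: Dq_def)
next
  case (Ip e'' u)
  show ?thesis
  proof (cases "e'' = e")
    case True
    then have "sgd w e b u \<le> 0" using not_seg[OF vw dw] assms Ip by auto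
    moreover have "len e \<le> dv (farv ends e b) (farv ends e (\<not> b))"
      using leaf_far[OF assms(1)] DF[OF vw dw] by auto
    moreover have "- nl w e b < sgd w e b u" using sgd_ge assms(2) Ip True by auto
    moreover have "0 \<le> dv (farv ends e b) (farv ends e b)" using dV_nonneg DF[OF vw dw] by auto
    ultimately show ?thesis using Dq_same[OF vw dw, of "farv ends e b" u] Ip True DF[OF vw dw] by simp
  next
    case False
    have e'': "e'' \<in> E" "0 < u" "u < len e''" using assms(2) Ip by auto
    have nz: "fst (ends e'') \<noteq> farv ends e b" "snd (ends e'') \<noteq> farv ends e b"
      using leaf_unique[OF assms(1) eE[OF vw dw] DF(7)[OF vw dw] e''(1)] False by (auto simp: inc_def)
    have "len e \<le> dv (farv ends e b) (fst (ends e''))" "len e \<le> dv (farv ends e b) (snd (ends e''))"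
      using leaf_far[OF assms(1)] nz edge_facts[OF e''(1)] by auto
    then show ?thesis using Ip e'' DF[OF vw dw] by (simp add: Dq_def)
  qed
qed

end

definition Aal :: "(nat \<Rightarrow> ('v,'e) point) \<Rightarrow> nat set \<Rightarrow> ('v,'e) point \<Rightarrow> 'e \<Rightarrow> bool \<Rightarrow> real" where
  "Aal x J w e b = (let P = {j \<in> J. on_seg ends len w e b (x j)} in
      if vdeg E ends (farv ends e b) = 1 \<and> P = {} then sl w e b
      else Min {alongd w e b (x j) | j. j \<in> P} / 2)"

context
  fixes w e b and x :: "nat \<Rightarrow> ('v,'e) point" and J :: "nat set"
  assumes vw: "valid_pt V E len w" and dw: "(e, b) \<in> dirs E ends w"
    and fJ: "finite J" and vx: "\<And>j. j \<in> J \<Longrightarrow> valid_pt V E len (x j)"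
    and ok: "vdeg E ends (farv ends e b) = 1 \<or> {j \<in> J. on_seg ends len w e b (x j)} \<noteq> {}"
begin

lemma A_empty: "{j \<in> J. on_seg ends len w e b (x j)} = {} \<Longrightarrow>
     Aal x J w e b = sl w e b \<and> vdeg E ends (farv ends e b) = 1"
  using ok by (simp add: Aal_def)

lemma A_ne:
  assumes "{j \<in> J. on_seg ends len w e b (x j)} \<noteq> {}"
  shows "2 * Aal x J w e b \<le> sl w e b" "0 < Aal x J w e b"
    "\<And>j. j \<in> J \<Longrightarrow> on_seg ends len w e b (x j) \<Longrightarrow> 2 * Aal x J w e b \<le> alongd w e b (x j)"
    "\<exists>j\<in>J. on_seg ends len w e b (x j) \<and> alongd w e b (x j) = 2 * Aal x J w e b"
proof -
  let ?P = "{j \<in> J. on_seg ends len w e b (x j)}"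
  let ?S = "{alongd w e b (x j) | j. j \<in> ?P}"
  have fS: "finite ?S" using fJ by simp
  have nS: "?S \<noteq> {}" using assms by auto
  have Aeq: "2 * Aal x J w e b = Min ?S" using assms unfolding Aal_def Let_def by (simp only: if_not_P) simp
  have "Min ?S \<in> ?S" using Min_in[OF fS nS] .
  then obtain j0 where j0: "j0 \<in> J" "on_seg ends len w e b (x j0)" "Min ?S = alongd w e b (x j0)" by auto
  then show "\<exists>j\<in>J. on_seg ends len w e b (x j) \<and> alongd w e b (x j) = 2 * Aal x J w e b"
    using Aeq by auto
  show "2 * Aal x J w e b \<le> alongd w e b (x j)" if "j \<in> J" "on_seg ends len w e b (x j)" for j
    using Aeq Min_le[OF fS] that by auto
  have "0 < alongd w e b (x j0) \<and> alongd w e b (x j0) \<le> sl w e b"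
    using alongd_rng[OF vw dw vx[OF j0(1)] j0(2)] .
  then show "2 * Aal x J w e b \<le> sl w e b" "0 < Aal x J w e b" using Aeq j0 by auto
qed

lemma A_pos: "0 < Aal x J w e b" and A_le: "Aal x J w e b \<le> sl w e b"
  using A_empty A_ne DF(1)[OF vw dw] by (cases "{j \<in> J. on_seg ends len w e b (x j)} = {}"; force)+

lemma G:
  assumes "j \<in> J"
  shows "min s (2 * Aal x J w e b - s) \<le> pd (Ip e (pos w e b s)) (x j)"
proof (rule PT_ge[OF vw dw])
  let ?A = "Aal x J w e b"
  have vq: "valid_pt V E len (x j)" using vx assms by auto
  have "0 \<le> Dq (farv ends e (\<not> b)) (x j)" using Dq_nonneg DF(6)[OF vw dw] vq by auto
  then show "min s (2 * ?A - s) \<le> nl w e b + s + Dq (farv ends e (\<not> b)) (x j)"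
    using DF(2)[OF vw dw] by linarith
  show "min s (2 * ?A - s) \<le> sl w e b - s + Dq (farv ends e b) (x j)"
  proof (cases "{j \<in> J. on_seg ends len w e b (x j)} = {}")
    case True
    then have "\<not> on_seg ends len w e b (x j)" using assms by auto
    then have "sl w e b \<le> Dq (farv ends e b) (x j)" using leaf_Dq[OF vw dw _ vq] A_empty[OF True] by auto
    then show ?thesis using A_empty[OF True] by linarith
  next
    case False
    have "0 \<le> Dq (farv ends e b) (x j)" using Dq_nonneg DF(5)[OF vw dw] vq by auto
    then show ?thesis using A_ne(1)[OF False] by linarith
  qed
  fix u assume xu: "x j = Ip e u"
  show "min s (2 * ?A - s) \<le> \<bar>s - sgd w e b u\<bar>"
  proof (cases "on_seg ends len w e b (x j)")
    case True
    then have "2 * ?A \<le> alongd w e b (x j)" using A_ne(3) assms by blast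
    then show ?thesis using xu by (simp add: alongd_def)
  next
    case False
    then have "sgd w e b u \<le> 0" using not_seg[OF vw dw] vq xu by auto
    then show ?thesis by linarith
  qed
qed

end
end

context net begin

lemma farv_in_dirs_Vx:
  assumes "e1 \<in> E" "ends e1 = (v, c) \<or> ends e1 = (c, v)"
  shows "(e1, v = fst (ends e1)) \<in> dirs E ends (Vx v)" "farv ends e1 (v = fst (ends e1)) = c"
  using assms edge_facts(3)[OF assms(1)] by (cases "ends e1"; auto simp: dirs_def farv_def)+

lemma lemF:
  assumes vw: "valid_pt V E len w" and u: "u \<in> V"
    and nv: "\<And>v. w = Vx v \<Longrightarrow> u \<noteq> v"
    and nleaf: "\<And>e1 b1. (e1, b1) \<in> dirs E ends w \<Longrightarrow> vdeg E ends (farv ends e1 b1) = 1 \<Longrightarrow> u \<noteq> farv ends e1 b1"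
    and dok: "\<And>e1 b1. (e1, b1) \<in> dirs E ends w \<Longrightarrow> vdeg E ends (farv ends e1 b1) = 1 \<or> Vx (farv ends e1 b1) \<in> S"
  shows "\<exists>z. Vx z \<in> S \<and> dv u z < Dq u w"
proof (cases w)
  case (Vx v)
  have v: "v \<in> V" using vw Vx by simp
  have uv: "u \<noteq> v" using nv Vx by auto
  obtain l0 where "wk v l0 u" using conn v u by blast
  then obtain e0 where "e0 \<in> E" using walk_first[OF _ uv[symmetric]] by blast
  then have Ene: "E \<noteq> {}" by auto
  define \<eta> where "\<eta> = Min (len ` E)"
  have \<eta>pos: "\<eta> > 0" unfolding \<eta>_def using finE Ene edge_facts(4) by (auto simp: Min_gr_iff)
  have \<eta>le: "\<And>e. e \<in> E \<Longrightarrow> \<eta> \<le> len e" unfolding \<eta>_def using finE by auto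
  obtain l where l: "wk v l u" "l < dv v u + \<eta>" using dV_approx[OF v u \<eta>pos] by blast
  obtain e1 c l1 where e1: "e1 \<in> E" "ends e1 = (v, c) \<or> ends e1 = (c, v)" "wk c l1 u" "l = len e1 + l1"
    using walk_first[OF l(1) uv[symmetric]] by blast
  have d1: "(e1, v = fst (ends e1)) \<in> dirs E ends w" "farv ends e1 (v = fst (ends e1)) = c"
    using farv_in_dirs_Vx[OF e1(1,2)] Vx by auto
  have Dqw: "Dq u w = dv u v" using Vx by (simp add: Dq_def)
  have symuv: "dv u v = dv v u" using dV_sym u v by auto
  show ?thesis
  proof (cases "vdeg E ends c = 1")
    case True
    have uc: "u \<noteq> c" using nleaf[OF d1(1)] d1(2) True by auto
    have "ends e1 = (c, v) \<or> ends e1 = (v, c)" using e1(2) by auto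
    then obtain l3 where l3: "wk v l3 u" "l1 = len e1 + l3"
      using walk_from_leaf[OF True e1(1) _ e1(3) uc] by blast
    have "dv v u \<le> l3" using dV_le[OF l3(1)] .
    then have False using l e1 l3 \<eta>le[OF e1(1)] \<eta>pos by linarith
    then show ?thesis ..
  next
    case False
    then have "Vx c \<in> S" using dok[OF d1(1)] d1(2) by auto
    moreover have "dv u c = dv c u" using dV_sym u walk_V[OF e1(3)] by auto
    moreover have "dv c u \<le> l1" using dV_le[OF e1(3)] .
    ultimately show ?thesis using l e1 \<eta>le[OF e1(1)] Dqw symuv by (intro exI[of _ c]) linarith
  qed
next
  case (Ip e t)
  have et: "e \<in> E" "0 < t" "t < len e" using vw Ip by auto
  have key: "\<exists>z. Vx z \<in> S \<and> dv u z < Dq u w"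
    if eq: "Dq u w = dv u (farv ends e b1) + (if b1 then len e - t else t)" for b1
  proof -
    have d: "(e, b1) \<in> dirs E ends w" using Ip by (simp add: dirs_def)
    let ?v = "farv ends e b1" and ?o = "farv ends e (\<not> b1)" and ?bw = "if b1 then len e - t else t"
    have bwpos: "0 < ?bw" using et by auto
    show ?thesis
    proof (cases "vdeg E ends ?v = 1")
      case False
      then have "Vx ?v \<in> S" using dok[OF d] by auto
      then show ?thesis using eq bwpos by auto
    next
      case True
      have uv: "u \<noteq> ?v" using nleaf[OF d True] .
      have "len e + dv ?o u \<le> dv ?v u" using dV_leaf[OF True eE[OF vw d] ends_z[OF vw d] u uv] .
      moreover have "dv ?v u = dv u ?v" "dv ?o u = dv u ?o" using dV_sym u DF[OF vw d] by auto
      moreover have "Dq u w \<le> dv u ?o + (len e - ?bw)"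
        using Ip by (cases b1) (auto simp: Dq_def farv_def)
      ultimately have False using eq bwpos by simp
      then show ?thesis ..
    qed
  qed
  have "Dq u w = dv u (farv ends e False) + (if False then len e - t else t) \<or>
        Dq u w = dv u (farv ends e True) + (if True then len e - t else t)"
    using Ip by (auto simp: Dq_def farv_def min_def)
  then show ?thesis using key by blast
qed


lemma OnEdge:
  fixes x :: "nat \<Rightarrow> ('v,'e) point"
  assumes vw: "valid_pt V E len w" and dw: "(e, b) \<in> dirs E ends w"
    and vx: "\<And>j. j < n \<Longrightarrow> valid_pt V E len (x j)"
    and dok: "vdeg E ends (farv ends e b) = 1 \<or> Vx (farv ends e b) \<in> {x j | j. j < n}"
    and s: "0 < s" "s < sl w e b"
    and cl: "\<And>j. j < n \<Longrightarrow> pd (Ip e (pos w e b s)) w \<le> pd (Ip e (pos w e b s)) (x j)"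
  shows "s \<le> Aal x {..<n} w e b"
proof (rule ccontr)
  assume sA: "\<not> s \<le> Aal x {..<n} w e b"
  let ?A = "Aal x {..<n} w e b" and ?y = "Ip e (pos w e b s)" and ?z = "farv ends e b" and ?z' = "farv ends e (\<not> b)"
  have ok: "vdeg E ends ?z = 1 \<or> {j \<in> {..<n}. on_seg ends len w e b (x j)} \<noteq> {}"
  proof -
    { assume "Vx ?z \<in> {x j | j. j < n}"
      then obtain j where "j < n" "x j = Vx ?z" by auto
      then have "{j \<in> {..<n}. on_seg ends len w e b (x j)} \<noteq> {}" by (auto simp: on_seg_def) }
    then show ?thesis using dok by auto
  qed
  note AA = A_empty[OF vw dw _ _ ok] A_ne[OF vw dw _ _ ok] A_pos[OF vw dw _ _ ok]
  have vx': "\<And>j. j \<in> {..<n} \<Longrightarrow> valid_pt V E len (x j)" using vx by auto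
  have ne: "{j \<in> {..<n}. on_seg ends len w e b (x j)} \<noteq> {}"
    using AA(1)[OF _ vx'] sA s by force
  obtain j0 where j0: "j0 < n" "on_seg ends len w e b (x j0)" "alongd w e b (x j0) = 2 * ?A"
    using AA(5)[OF _ vx' ne] by auto
  have Apos: "0 < ?A" using AA(6)[OF _ vx'] by simp
  have c_le: "pd ?y (x j0) \<le> \<bar>s - 2 * ?A\<bar>"
  proof -
    have "x j0 = Vx ?z \<or> (\<exists>u. x j0 = Ip e u \<and> 0 < sgd w e b u)"
      using on_seg_iff[OF vw dw vx[OF j0(1)]] j0(2) by auto
    then show ?thesis
    proof
      assume xz: "x j0 = Vx ?z"
      then have "2 * ?A = sl w e b" using j0(3) by (simp add: alongd_def)
      moreover have "pd ?y (x j0) \<le> sl w e b - s + Dq ?z (x j0)" by (rule PT_le2[OF vw dw])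
      moreover have "Dq ?z (x j0) = 0" using xz dV_refl DF(5)[OF vw dw] by (simp add: Dq_def)
      ultimately show ?thesis by simp
    next
      assume "\<exists>u. x j0 = Ip e u \<and> 0 < sgd w e b u"
      then obtain u where u: "x j0 = Ip e u" by auto
      then have "sgd w e b u = 2 * ?A" using j0(3) by (simp add: alongd_def)
      then show ?thesis using PT_le3[OF vw dw, of s u] u by simp
    qed
  qed
  let ?R = "sl w e b - s + min (dv ?z ?z' + nl w e b) (sl w e b)"
  have w_ge: "min s ?R \<le> pd ?y w"
  proof (rule PT_ge[OF vw dw])
    have "0 \<le> Dq ?z' w" using Dq_nonneg DF(6)[OF vw dw] vw by auto
    then show "min s ?R \<le> nl w e b + s + Dq ?z' w" using DF(2)[OF vw dw] by linarith
    have "min (dv ?z ?z' + nl w e b) (dv ?z ?z + sl w e b) \<le> Dq ?z w" using Dq_w[OF vw dw] DF(5)[OF vw dw] by auto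
    then show "min s ?R \<le> sl w e b - s + Dq ?z w" using dV_refl DF(5)[OF vw dw] by auto
    fix u assume "w = Ip e u"
    then have "coord ends len w e = u" using DF_Ip[OF vw dw] by auto
    then show "min s ?R \<le> \<bar>s - sgd w e b u\<bar>" using s by (simp add: sgd_def)
  qed
  have lt: "\<bar>s - 2 * ?A\<bar> < s" using sA Apos s by linarith
  have "pd ?y w \<le> pd ?y (x j0)" using cl[OF j0(1)] .
  then have Rs: "?R < s" using w_ge c_le lt by linarith
  then have R2: "?R = sl w e b - s + (dv ?z ?z' + nl w e b)" "dv ?z ?z' + nl w e b < sl w e b" using s by auto
  show False
  proof (cases "vdeg E ends ?z = 1")
    case True
    have "len e \<le> dv ?z ?z'" using leaf_far[OF vw dw True] DF[OF vw dw] by auto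
    then show False using R2 DF[OF vw dw] by linarith
  next
    case False
    then obtain j1 where j1: "j1 < n" "x j1 = Vx ?z" using dok by auto
    have "pd ?y (x j1) \<le> sl w e b - s + Dq ?z (x j1)" by (rule PT_le2[OF vw dw])
    moreover have "Dq ?z (x j1) = 0" using j1 dV_refl DF(5)[OF vw dw] by (simp add: Dq_def)
    moreover have "0 < dv ?z ?z'" using dV_pos DF[OF vw dw] by auto
    moreover have "pd ?y w \<le> pd ?y (x j1)" using cl[OF j1(1)] .
    ultimately show False using w_ge Rs R2 DF(2)[OF vw dw] by linarith
  qed
qed


lemma Cell:
  fixes x :: "nat \<Rightarrow> ('v,'e) point"
  assumes i: "i < n" and vx: "\<And>j. j < n \<Longrightarrow> valid_pt V E len (x j)"
    and dok: "\<And>e1 b1. (e1, b1) \<in> dirs E ends (x i) \<Longrightarrow>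
        vdeg E ends (farv ends e1 b1) = 1 \<or> Vx (farv ends e1 b1) \<in> {x j | j. j < n}"
    and e': "e' \<in> E" "0 < t" "t < len e'"
    and cl: "\<And>j. j < n \<Longrightarrow> pd (Ip e' t) (x i) \<le> pd (Ip e' t) (x j)"
  shows "\<exists>b. (e', b) \<in> dirs E ends (x i) \<and> 0 \<le> sgd (x i) e' b t \<and> sgd (x i) e' b t \<le> Aal x {..<n} (x i) e' b"
proof -
  let ?w = "x i"
  have vw: "valid_pt V E len ?w" using vx i by auto
  have vx': "\<And>j. j \<in> {..<n} \<Longrightarrow> valid_pt V E len (x j)" using vx by auto
  have okd: "vdeg E ends (farv ends e1 b1) = 1 \<or> {j \<in> {..<n}. on_seg ends len ?w e1 b1 (x j)} \<noteq> {}"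
    if "(e1, b1) \<in> dirs E ends ?w" for e1 b1
  proof -
    { assume "Vx (farv ends e1 b1) \<in> {x j | j. j < n}"
      then obtain j where "j < n" "x j = Vx (farv ends e1 b1)" by auto
      then have "{j \<in> {..<n}. on_seg ends len ?w e1 b1 (x j)} \<noteq> {}" by (auto simp: on_seg_def) }
    then show ?thesis using dok[OF that] by auto
  qed
  have vy: "valid_pt V E len (Ip e' t)" using e' by simp
  show ?thesis
  proof (cases "\<exists>b. (e', b) \<in> dirs E ends ?w")
    case True
    have "\<exists>b. (e', b) \<in> dirs E ends ?w \<and> (0 < sgd ?w e' b t \<or> sgd ?w e' b t = 0)"
    proof (cases ?w)
      case (Vx v)
      obtain b where b: "(e', b) \<in> dirs E ends ?w" using True by auto
      have "- nl ?w e' b < sgd ?w e' b t" using sgd_ge[OF vw b vy] .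
      then show ?thesis using DF_Vx'[OF vw b Vx] b by auto
    next
      case (Ip e0 t0)
      then have "e0 = e'" using True by (auto simp: dirs_def)
      then have d: "(e', True) \<in> dirs E ends ?w" "(e', False) \<in> dirs E ends ?w" using Ip by (auto simp: dirs_def)
      have c: "coord ends len ?w e' = t0" using Ip by (simp add: coord_def)
      show ?thesis
      proof (cases "t0 < t")
        case True then show ?thesis using d c by (intro exI[of _ True]) (simp add: sgd_def)
      next
        case False then show ?thesis using d c by (intro exI[of _ False]) (auto simp: sgd_def)
      qed
    qed
    then obtain b where b: "(e', b) \<in> dirs E ends ?w" "0 < sgd ?w e' b t \<or> sgd ?w e' b t = 0" by blast
    show ?thesis
    proof (cases "sgd ?w e' b t = 0")
      case True
      then show ?thesis using A_pos[OF vw b(1) _ vx' okd[OF b(1)]] b by auto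
    next
      case False
      then have sp: "0 < sgd ?w e' b t" using b by auto
      have "Ip e' (pos ?w e' b (sgd ?w e' b t)) = Ip e' t" using pos_sig[OF vw b(1)] by simp
      then have "sgd ?w e' b t \<le> Aal x {..<n} ?w e' b"
        using OnEdge[where s="sgd ?w e' b t", OF vw b(1) vx _ sp sig_lt[OF vw b(1) vy]] dok[OF b(1)] cl by auto
      then show ?thesis using b sp by auto
    qed
  next
    case False
    note nod = False
    have "\<exists>u a. (u = fst (ends e') \<and> a = t \<or> u = snd (ends e') \<and> a = len e' - t) \<and> pd (Ip e' t) ?w = a + Dq u ?w"
    proof -
      have "\<not> (\<exists>t0. ?w = Ip e' t0)" using nod by (auto simp: dirs_def)
      then have "pd (Ip e' t) ?w = min (t + Dq (fst (ends e')) ?w) (len e' - t + Dq (snd (ends e')) ?w)"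
        by (cases ?w) (auto simp: pd_Ip Let_def)
      then show ?thesis by (auto simp: min_def)
    qed
    then obtain u a where ua: "u = fst (ends e') \<and> a = t \<or> u = snd (ends e') \<and> a = len e' - t"
      "pd (Ip e' t) ?w = a + Dq u ?w" by blast
    have uV: "u \<in> V" and incu: "inc e' u" using ua(1) edge_facts[OF e'(1)] by (auto simp: inc_def)
    have nv: "u \<noteq> v" if "?w = Vx v" for v
    proof
      assume "u = v"
      then have "(e', v = fst (ends e')) \<in> dirs E ends ?w" using that e'(1) incu by (auto simp: dirs_def inc_def)
      then show False using nod by auto
    qed
    have nleaf: "u \<noteq> farv ends e1 b1" if "(e1, b1) \<in> dirs E ends ?w" "vdeg E ends (farv ends e1 b1) = 1" for e1 b1
    proof
      assume "u = farv ends e1 b1"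
      then have "e' = e1" using leaf_unique[OF that(2) eE[OF vw that(1)] DF(7)[OF vw that(1)] e'(1)] incu by auto
      then show False using nod that by auto
    qed
    obtain z where z: "Vx z \<in> {x j | j. j < n}" "dv u z < Dq u ?w"
      using lemF[OF vw uV nv nleaf dok] by blast
    then obtain j where j: "j < n" "x j = Vx z" by auto
    have "pd (Ip e' t) (Vx z) \<le> a + Dq u (Vx z)" using ua(1) by (auto simp: pd_Ip_Vx)
    then have "pd (Ip e' t) (x j) < pd (Ip e' t) ?w" using z ua(2) j by (simp add: Dq_def)
    then show ?thesis using cl[OF j(1)] by linarith
  qed
qed

end


lemma ind_int_closed:
  assumes "0 \<le> a" "a \<le> b" "b \<le> (L::real)"
  shows "((\<lambda>t. if a \<le> t \<and> t \<le> b then c else 0) has_integral c * (b - a)) {0..L}"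
proof -
  have "((\<lambda>t. c) has_integral c * (b - a)) {a..b}"
    using has_integral_const_real[of c a b] assms by (simp add: mult.commute)
  then have "((\<lambda>t. if t \<in> {a..b} then c else 0) has_integral c * (b - a)) {0..L}"
    unfolding has_integral_restrict_Int using assms by (simp add: Int_absorb2)
  then show ?thesis by simp
qed

lemma ind_int_open:
  assumes "0 \<le> a" "a \<le> b" "b \<le> (L::real)"
  shows "((\<lambda>t. if a < t \<and> t < b then c else 0) has_integral c * (b - a)) {0..L}"
proof -
  have cl: "((\<lambda>t. if a \<le> t \<and> t \<le> b then c else 0) has_integral c * (b - a)) {0..L}"
    by (rule ind_int_closed[OF assms])
  show ?thesis
    apply (rule has_integral_spike_finite[of "{a, b}" _ _ "\<lambda>t. if a \<le> t \<and> t \<le> b then c else 0", OF _ _ cl])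
    by auto
qed

lemma integral_nonneg': "(\<And>t. t \<in> S \<Longrightarrow> 0 \<le> (f t::real)) \<Longrightarrow> 0 \<le> integral S f"
  by (cases "f integrable_on S") (auto intro: integral_nonneg simp: not_integrable_integral)

lemma integral_le': assumes "(g has_integral I) S" "\<And>t. t \<in> S \<Longrightarrow> (f t::real) \<le> g t" "0 \<le> I"
  shows "integral S f \<le> I"
proof (cases "f integrable_on S")
  case True
  then show ?thesis using has_integral_le[OF integrable_integral[OF True] assms(1)] assms(2) by auto
next
  case False
  then show ?thesis using assms(3) by (simp add: not_integrable_integral)
qed

lemma integral_ge': assumes "(g has_integral I) S" "f integrable_on S" "\<And>t. t \<in> S \<Longrightarrow> g t \<le> (f t::real)"
  shows "I \<le> integral S f"
  using has_integral_le[OF assms(1) integrable_integral[OF assms(2)]] assms(3) by auto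

context net begin

lemma closest_mem:
  assumes "i < n" "x i \<in> closest V E ends len n x y" "j < n"
  shows "pd y (x i) \<le> pd y (x j)"
proof -
  let ?S = "{pd y (x j) | j. j < n}"
  have fS: "finite ?S" by simp
  obtain j' where j': "j' < n" "x j' = x i" "pd y (x j') = Min ?S"
    using assms(2) by (auto simp: closest_def Let_def)
  have "pd y (x j) \<in> ?S" using assms(3) by auto
  from Min_le[OF fS this] have "Min ?S \<le> pd y (x j)" .
  then show ?thesis using j' by simp
qed

lemma share_nonneg: "0 \<le> share V E ends len n x i y"
  by (simp add: share_def)

lemma share_le:
  assumes "i < n"
  shows "share V E ends len n x i y \<le> (if x i \<in> closest V E ends len n x y then 1 / real (card {j. j < n \<and> x j = x i}) else 0)"
proof (cases "x i \<in> closest V E ends len n x y")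
  case True
  have "finite (closest V E ends len n x y)" by (simp add: closest_def Let_def)
  then have "card (closest V E ends len n x y) \<ge> 1" using True by (metis One_nat_def Suc_leI card_gt_0_iff empty_iff)
  then have "1 / real (card (closest V E ends len n x y)) \<le> 1" by simp
  moreover have "0 \<le> 1 / real (card {j. j < n \<and> x j = x i})" by simp
  ultimately have "(1 / real (card (closest V E ends len n x y))) * (1 / real (card {j. j < n \<and> x j = x i}))
     \<le> 1 * (1 / real (card {j. j < n \<and> x j = x i}))" by (intro mult_right_mono) auto
  then show ?thesis using True by (simp add: share_def)
next
  case False then show ?thesis by (simp add: share_def)
qed

lemma share_one:
  assumes "i < n" "\<And>j. j < n \<Longrightarrow> j \<noteq> i \<Longrightarrow> pd y (x i) < pd y (x j)"
  shows "share V E ends len n x i y = 1"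
proof -
  let ?S = "{pd y (x j) | j. j < n}"
  have fS: "finite ?S" by simp
  have m: "Min ?S = pd y (x i)"
  proof (rule Min_eqI[OF fS])
    show "pd y (x i) \<in> ?S" using assms(1) by auto
    fix z assume "z \<in> ?S"
    then obtain j where "j < n" "z = pd y (x j)" by auto
    then show "pd y (x i) \<le> z" using assms(2)[of j] by (cases "j = i") auto
  qed
  have u: "\<And>j. j < n \<Longrightarrow> pd y (x j) = pd y (x i) \<Longrightarrow> j = i" using assms(2) by force
  have c: "closest V E ends len n x y = {x i}"
    unfolding closest_def Let_def m using u assms(1) by blast
  have k: "{j. j < n \<and> x j = x i} = {i}" using u assms(1) by auto
  show ?thesis by (simp add: share_def c k)
qed

end

context net begin

lemma okd_of_dok:
  fixes x :: "nat \<Rightarrow> ('v,'e) point"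
  assumes "vdeg E ends (farv ends e1 b1) = 1 \<or> Vx (farv ends e1 b1) \<in> {x j | j. j \<in> J}"
  shows "vdeg E ends (farv ends e1 b1) = 1 \<or> {j \<in> J. on_seg ends len w e1 b1 (x j)} \<noteq> {}"
proof -
  { assume "Vx (farv ends e1 b1) \<in> {x j | j. j \<in> J}"
    then obtain j where "j \<in> J" "x j = Vx (farv ends e1 b1)" by auto
    then have "{j \<in> J. on_seg ends len w e1 b1 (x j)} \<noteq> {}" by (auto simp: on_seg_def) }
  then show ?thesis using assms by auto
qed

lemma payoff_upper:
  fixes x :: "nat \<Rightarrow> ('v,'e) point"
  assumes i: "i < n" and vx: "\<And>j. j < n \<Longrightarrow> valid_pt V E len (x j)"
    and dok: "\<And>e1 b1. (e1, b1) \<in> dirs E ends (x i) \<Longrightarrow>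
        vdeg E ends (farv ends e1 b1) = 1 \<or> Vx (farv ends e1 b1) \<in> {x j | j. j < n}"
  shows "payoff V E ends len n x i \<le>
     (1 / real (card {j. j < n \<and> x j = x i})) * (\<Sum>eb \<in> dirs E ends (x i). Aal x {..<n} (x i) (fst eb) (snd eb))"
proof -
  let ?w = "x i" and ?k = "real (card {j. j < n \<and> x j = x i})"
  let ?A = "\<lambda>e b. Aal x {..<n} ?w e b"
  have vw: "valid_pt V E len ?w" using vx i by auto
  have vx': "\<And>j. j \<in> {..<n} \<Longrightarrow> valid_pt V E len (x j)" using vx by auto
  have okd: "\<And>e1 b1. (e1, b1) \<in> dirs E ends ?w \<Longrightarrow>
      vdeg E ends (farv ends e1 b1) = 1 \<or> {j \<in> {..<n}. on_seg ends len ?w e1 b1 (x j)} \<noteq> {}"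
  proof -
    fix e1 b1 assume d: "(e1, b1) \<in> dirs E ends ?w"
    have "{x j | j. j \<in> {..<n}} = {x j | j. j < n}" by simp
    then show "vdeg E ends (farv ends e1 b1) = 1 \<or> {j \<in> {..<n}. on_seg ends len ?w e1 b1 (x j)} \<noteq> {}"
      using okd_of_dok[of e1 b1 x "{..<n}" ?w] dok[OF d] by simp
  qed
  have kpos: "0 \<le> 1 / ?k" by simp
  define B where "B e' = {b. (e', b) \<in> dirs E ends ?w}" for e'
  define lo where "lo e' b = (if b then coord ends len ?w e' else coord ends len ?w e' - ?A e' b)" for e' b
  define hi where "hi e' b = (if b then coord ends len ?w e' + ?A e' b else coord ends len ?w e')" for e' b
  define g where "g e' t = (\<Sum>b\<in>B e'. if lo e' b \<le> t \<and> t \<le> hi e' b then 1 / ?k else 0)" for e' t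
  have edge_bound: "integral {0..len e'} (\<lambda>t. share V E ends len n x i (Ip e' t))
      \<le> (\<Sum>b\<in>B e'. 1 / ?k * ?A e' b)" if e': "e' \<in> E" for e'
  proof -
    have bnd: "0 \<le> lo e' b \<and> lo e' b \<le> hi e' b \<and> hi e' b \<le> len e' \<and> hi e' b - lo e' b = ?A e' b"
      if b: "b \<in> B e'" for b
    proof -
      have d: "(e', b) \<in> dirs E ends ?w" using b by (simp add: B_def)
      have "0 < ?A e' b" "?A e' b \<le> sl ?w e' b" using A_pos[OF vw d _ vx' okd[OF d]] A_le[OF vw d _ vx' okd[OF d]] by auto
      then show ?thesis using coord_rng[OF vw d] by (cases b) (auto simp: lo_def hi_def sl_def farc_def)
    qed
    have fB: "finite (B e')" by simp
    have gint: "(g e' has_integral (\<Sum>b\<in>B e'. 1 / ?k * ?A e' b)) {0..len e'}"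
      unfolding g_def
    proof (rule has_integral_sum[OF fB])
      fix b assume b: "b \<in> B e'"
      have "((\<lambda>t. if lo e' b \<le> t \<and> t \<le> hi e' b then 1 / ?k else 0) has_integral 1 / ?k * (hi e' b - lo e' b)) {0..len e'}"
        using bnd[OF b] by (intro ind_int_closed) auto
      then show "((\<lambda>t. if lo e' b \<le> t \<and> t \<le> hi e' b then 1 / ?k else 0) has_integral 1 / ?k * ?A e' b) {0..len e'}"
        using bnd[OF b] by simp
    qed
    have gnn: "0 \<le> g e' t" for t unfolding g_def by (intro sum_nonneg) auto
    let ?f = "\<lambda>t. share V E ends len n x i (Ip e' t)"
    let ?f' = "\<lambda>t. if t \<in> {0, len e'} then 0 else ?f t"
    have "integral {0..len e'} ?f = integral {0..len e'} ?f'"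
      by (rule integral_spike[of "{0, len e'}"]) auto
    also have "\<dots> \<le> (\<Sum>b\<in>B e'. 1 / ?k * ?A e' b)"
    proof (rule integral_le'[OF gint])
      show "0 \<le> (\<Sum>b\<in>B e'. 1 / ?k * ?A e' b)"
      proof (intro sum_nonneg)
        fix b assume "b \<in> B e'"
        then have "0 \<le> ?A e' b" using bnd by force
        then show "0 \<le> 1 / ?k * ?A e' b" by simp
      qed
      fix t assume t: "t \<in> {0..len e'}"
      show "?f' t \<le> g e' t"
      proof (cases "t \<in> {0, len e'}")
        case True then show ?thesis using gnn by simp
      next
        case False
        then have t': "0 < t" "t < len e'" using t by auto
        have fle: "?f t \<le> (if x i \<in> closest V E ends len n x (Ip e' t) then 1 / ?k else 0)"
          using share_le[OF i] by simp
        show ?thesis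
        proof (cases "x i \<in> closest V E ends len n x (Ip e' t)")
          case False
          then have "?f t \<le> 0" using fle by simp
          then show ?thesis using gnn[of t] t' by simp
        next
          case True
          have cl: "\<And>j. j < n \<Longrightarrow> pd (Ip e' t) (x i) \<le> pd (Ip e' t) (x j)"
            using closest_mem[OF i True] .
          obtain b where b: "(e', b) \<in> dirs E ends ?w" "0 \<le> sgd ?w e' b t" "sgd ?w e' b t \<le> ?A e' b"
            using Cell[OF i vx dok e' t' cl] by blast
          have bB: "b \<in> B e'" using b by (simp add: B_def)
          have inb: "lo e' b \<le> t \<and> t \<le> hi e' b" using b by (cases b) (auto simp: lo_def hi_def sgd_def)
          have "(if lo e' b \<le> t \<and> t \<le> hi e' b then 1 / ?k else 0) \<le> g e' t"
            unfolding g_def by (rule member_le_sum[OF bB]) auto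
          then show ?thesis using fle inb t' True by auto
        qed
      qed
    qed
    finally show ?thesis .
  qed
  have "payoff V E ends len n x i \<le> (\<Sum>e'\<in>E. \<Sum>b\<in>B e'. 1 / ?k * ?A e' b)"
    unfolding payoff_def by (rule sum_mono) (rule edge_bound)
  also have "\<dots> = (\<Sum>eb\<in>Sigma E B. 1 / ?k * ?A (fst eb) (snd eb))"
    by (subst sum.Sigma) (auto simp: finE B_def split_def)
  also have "Sigma E B = dirs E ends ?w" using eE[OF vw] by (auto simp: B_def)
  finally show ?thesis by (simp add: sum_distrib_left)
qed

end


lemma cont_Min_family:
  fixes f :: "nat \<Rightarrow> real \<Rightarrow> real"
  assumes "finite J" "J \<noteq> {}" "\<And>j. j \<in> J \<Longrightarrow> continuous_on UNIV (f j)"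
  shows "continuous_on UNIV (\<lambda>t. Min ((\<lambda>j. f j t) ` J))"
  using assms
proof (induction J rule: finite_ne_induct)
  case (singleton x) then show ?case by simp
next
  case (insert x F)
  then show ?case by (simp add: continuous_on_min)
qed

lemma inv_nat_le1: "1 / real (k::nat) \<le> 1" by (cases k) auto

context net begin

lemma pd_cont: "continuous_on UNIV (\<lambda>t. pd (Ip e t) q)"
proof (cases q)
  case (Vx v) then show ?thesis by (simp add: pd_Ip Let_def) (intro continuous_intros continuous_on_min)
next
  case (Ip e' s)
  then show ?thesis
    by (cases "e' = e") (simp_all add: pd_Ip Let_def, (intro continuous_intros continuous_on_min)+)
qed

lemma share_borel:
  fixes x :: "nat \<Rightarrow> ('v,'e) point"
  shows "(\<lambda>t. share V E ends len n x i (Ip e t)) \<in> borel_measurable borel"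
proof -
  define d where "d j t = pd (Ip e t) (x j)" for j t
  define m where "m t = Min {d j t | j. j < n}" for t
  define J where "J t = {j. j < n \<and> d j t = m t}" for t
  define \<Phi> where "\<Phi> S = (if x i \<in> x ` S then (1 / real (card (x ` S))) * (1 / real (card {j. j < n \<and> x j = x i})) else 0)" for S
  have eq: "share V E ends len n x i (Ip e t) = \<Phi> (J t)" for t
  proof -
    have "closest V E ends len n x (Ip e t) = x ` J t"
      by (auto simp: closest_def J_def m_def d_def Let_def)
    then show ?thesis by (simp add: share_def \<Phi>_def)
  qed
  show ?thesis
  proof (cases "n = 0")
    case True
    then have "J t = {}" for t by (simp add: J_def)
    then show ?thesis using eq by simp
  next
    case False
    have mset: "m t = Min ((\<lambda>j. d j t) ` {..<n})" for t
      unfolding m_def by (rule arg_cong[where f=Min]) auto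
    have cm: "continuous_on UNIV m"
      unfolding mset using False by (intro cont_Min_family) (auto simp: d_def pd_cont)
    have cd: "continuous_on UNIV (d j)" for j unfolding d_def by (rule pd_cont)
    define C where "C j = {t. d j t = m t}" for j
    have Cc: "closed (C j)" for j unfolding C_def by (rule closed_Collect_eq[OF cd cm])
    have Jm: "J \<in> borel \<rightarrow>\<^sub>M count_space (Pow {..<n})"
    proof (subst measurable_count_space_eq2, simp, intro conjI)
      show "J \<in> space borel \<rightarrow> Pow {..<n}" by (auto simp: J_def)
      show "\<forall>a\<in>Pow {..<n}. J -` {a} \<inter> space borel \<in> sets borel"
      proof
        fix S assume S: "S \<in> Pow {..<n}"
        have "J -` {S} \<inter> space borel = (\<Inter>j\<in>S. C j) \<inter> (\<Inter>j\<in>{..<n} - S. - C j)"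
          using S by (auto simp: J_def C_def)
        moreover have "closed (\<Inter>j\<in>S. C j)" using Cc by auto
        moreover have "open (\<Inter>j\<in>{..<n} - S. - C j)" using Cc by (intro open_INT) auto
        ultimately show "J -` {S} \<inter> space borel \<in> sets borel" by auto
      qed
    qed
    have "(\<lambda>t. \<Phi> (J t)) \<in> borel_measurable borel"
      by (rule measurable_compose[OF Jm]) (simp add: measurable_count_space_eq1)
    then show ?thesis using eq by simp
  qed
qed

lemma share_integrable:
  fixes x :: "nat \<Rightarrow> ('v,'e) point"
  shows "(\<lambda>t. share V E ends len n x i (Ip e t)) integrable_on {a..b}"
proof (rule measurable_bounded_by_integrable_imp_integrable_real)
  show "(\<lambda>t. share V E ends len n x i (Ip e t)) \<in> borel_measurable (lebesgue_on {a..b})"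
    using measurable_compose[OF id_borel_measurable_lebesgue_on share_borel] by simp
  show "(\<lambda>t. 1::real) integrable_on {a..b}" by (rule has_integral_integrable[OF has_integral_const_real])
  show "{a..b} \<in> sets lebesgue" by simp
  fix t
  show "\<bar>share V E ends len n x i (Ip e t)\<bar> \<le> 1"
  proof -
    have "0 \<le> share V E ends len n x i (Ip e t)" by (rule share_nonneg)
    moreover have "share V E ends len n x i (Ip e t) \<le> 1"
      unfolding share_def
    proof (cases "x i \<in> closest V E ends len n x (Ip e t)")
      case True
      have "finite (closest V E ends len n x (Ip e t))" by (simp add: closest_def Let_def)
      then have c1: "1 \<le> real (card (closest V E ends len n x (Ip e t)))" using True
        by (metis One_nat_def Suc_leI card_gt_0_iff empty_iff of_nat_1 of_nat_le_iff)
      have "0 \<le> 1 / real (card {j. j < n \<and> x j = x i})" by auto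
      have "1 / real (card {j. j < n \<and> x j = x i}) \<le> 1"
        using inv_nat_le1 by blast
      then show "(if x i \<in> closest V E ends len n x (Ip e t) then 1 / real (card (closest V E ends len n x (Ip e t))) *
          (1 / real (card {j. j < n \<and> x j = x i})) else 0) \<le> 1"
        using True inv_nat_le1[of "card (closest V E ends len n x (Ip e t)) * card {j. j < n \<and> x j = x i}"] by simp
    qed simp
    ultimately show ?thesis by simp
  qed
qed

end


lemma lim_ge:
  fixes A S \<pi> emax :: real
  assumes "\<And>\<epsilon>. 0 < \<epsilon> \<Longrightarrow> \<epsilon> < emax \<Longrightarrow> min A (S - \<epsilon>/2) \<le> \<pi>" "0 < emax" "A \<le> S"
  shows "A \<le> \<pi>"
proof (rule ccontr)
  assume "\<not> A \<le> \<pi>"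
  then have h: "\<pi> < A" by simp
  define \<epsilon> where "\<epsilon> = min (emax/2) (S - \<pi>)"
  have "0 < \<epsilon>" "\<epsilon> < emax" using h assms(2,3) by (auto simp: \<epsilon>_def)
  from assms(1)[OF this] have "min A (S - \<epsilon>/2) \<le> \<pi>" .
  moreover have "\<epsilon> \<le> S - \<pi>" by (simp add: \<epsilon>_def)
  then have "\<pi> < S - \<epsilon>/2" using h assms(3) \<open>0 < \<epsilon>\<close> by linarith
  ultimately show False using h by linarith
qed

context net begin

lemma Dev:
  fixes x :: "nat \<Rightarrow> ('v,'e) point"
  assumes i: "i < n" and vx: "\<And>j. j < n \<Longrightarrow> valid_pt V E len (x j)"
    and vw: "valid_pt V E len w" and dw: "(e, b) \<in> dirs E ends w"
    and ok: "vdeg E ends (farv ends e b) = 1 \<or> {j \<in> {..<n} - {i}. on_seg ends len w e b (x j)} \<noteq> {}"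
    and \<epsilon>: "0 < \<epsilon>" "\<epsilon> < sl w e b" "\<epsilon> < 2 * Aal x ({..<n} - {i}) w e b"
  shows "min (Aal x ({..<n} - {i}) w e b) (sl w e b - \<epsilon>/2)
     \<le> payoff V E ends len n (x(i := Ip e (pos w e b \<epsilon>))) i"
proof -
  let ?J = "{..<n} - {i}"
  let ?A = "Aal x ?J w e b" and ?sl = "sl w e b" and ?co = "coord ends len w e"
  let ?p = "Ip e (pos w e b \<epsilon>)"
  let ?x' = "x(i := ?p)"
  have fJ: "finite ?J" by simp
  have vxJ: "\<And>j. j \<in> ?J \<Longrightarrow> valid_pt V E len (x j)" using vx by auto
  have Apos: "0 < ?A" and Ale: "?A \<le> ?sl" using A_pos[OF vw dw fJ vxJ ok] A_le[OF vw dw fJ vxJ ok] by auto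
  define hs where "hs = min (?A + \<epsilon>/2) ?sl"
  define tl where "tl = (if b then ?co + \<epsilon>/2 else ?co - hs)"
  define th where "th = (if b then ?co + hs else ?co - \<epsilon>/2)"
  have crng: "0 \<le> ?co" "?co \<le> len e" using coord_rng[OF vw dw] by auto
  have slb: "?sl = (if b then len e - ?co else ?co)" using crng by (auto simp: sl_def farc_def)
  have bnds: "0 \<le> tl" "tl \<le> th" "th \<le> len e" "th - tl = min ?A (?sl - \<epsilon>/2)"
    using crng slb \<epsilon> Apos Ale by (auto simp: tl_def th_def hs_def split: if_splits)
  have one: "share V E ends len n ?x' i (Ip e t) = 1" if t: "tl < t" "t < th" for t
  proof -
    let ?s = "sgd w e b t"
    have s: "\<epsilon>/2 < ?s" "?s < hs" using t by (auto simp: tl_def th_def sgd_def split: if_splits)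
    have y: "Ip e t = Ip e (pos w e b ?s)" using pos_sig[OF vw dw] by simp
    show ?thesis
    proof (rule share_one)
      show "i < n" by fact
      fix j assume j: "j < n" "j \<noteq> i"
      have "pd (Ip e (pos w e b ?s)) (Ip e (pos w e b \<epsilon>)) \<le> \<bar>?s - sgd w e b (pos w e b \<epsilon>)\<bar>"
        by (rule PT_le3[OF vw dw])
      then have d1: "pd (Ip e t) ?p \<le> \<bar>?s - \<epsilon>\<bar>" using y pos_sig[OF vw dw] by simp
      have "min ?s (2 * ?A - ?s) \<le> pd (Ip e (pos w e b ?s)) (x j)"
        using G[OF vw dw fJ vxJ ok] j by auto
      then have d2: "min ?s (2 * ?A - ?s) \<le> pd (Ip e t) (x j)" using y by simp
      have "\<bar>?s - \<epsilon>\<bar> < min ?s (2 * ?A - ?s)" using s \<epsilon> unfolding hs_def by auto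
      then have "\<bar>?s - \<epsilon>\<bar> < pd (Ip e t) (x j)" using d2 by linarith
      then have "pd (Ip e t) ?p < pd (Ip e t) (x j)" using d1 by linarith
      then show "pd (Ip e t) (?x' i) < pd (Ip e t) (?x' j)" using j by simp
    qed
  qed
  have int_ge: "th - tl \<le> integral {0..len e} (\<lambda>t. share V E ends len n ?x' i (Ip e t))"
  proof (rule integral_ge'[OF _ share_integrable])
    show "((\<lambda>t. if tl < t \<and> t < th then 1 else 0) has_integral th - tl) {0..len e}"
      using ind_int_open[OF bnds(1-3), of 1] by simp
    fix t
    show "(if tl < t \<and> t < th then 1 else 0) \<le> share V E ends len n ?x' i (Ip e t)"
      using one share_nonneg by auto
  qed
  have "integral {0..len e} (\<lambda>t. share V E ends len n ?x' i (Ip e t))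
     \<le> payoff V E ends len n ?x' i"
    unfolding payoff_def
    by (rule member_le_sum[OF eE[OF vw dw] _ finE]) (intro integral_nonneg' share_nonneg)
  then show ?thesis using int_ge bnds(4) by linarith
qed

lemma DevBound:
  fixes x :: "nat \<Rightarrow> ('v,'e) point"
  assumes nash: "nash V E ends len n x" and i: "i < n"
    and vw: "valid_pt V E len w" and dw: "(e, b) \<in> dirs E ends w"
    and ok: "vdeg E ends (farv ends e b) = 1 \<or> {j \<in> {..<n} - {i}. on_seg ends len w e b (x j)} \<noteq> {}"
  shows "Aal x ({..<n} - {i}) w e b \<le> payoff V E ends len n x i"
proof -
  have vx: "\<And>j. j < n \<Longrightarrow> valid_pt V E len (x j)" using nash by (auto simp: nash_def)
  let ?J = "{..<n} - {i}"
  have vxJ: "\<And>j. j \<in> ?J \<Longrightarrow> valid_pt V E len (x j)" using vx by auto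
  have Apos: "0 < Aal x ?J w e b" and Ale: "Aal x ?J w e b \<le> sl w e b"
    using A_pos[OF vw dw _ vxJ ok] A_le[OF vw dw _ vxJ ok] by auto
  show ?thesis
  proof (rule lim_ge[where emax = "min (sl w e b) (2 * Aal x ?J w e b)"])
    fix \<epsilon> :: real assume e: "0 < \<epsilon>" "\<epsilon> < min (sl w e b) (2 * Aal x ?J w e b)"
    have "valid_pt V E len (Ip e (pos w e b \<epsilon>))" using pt_valid[OF vw dw] e by auto
    then have "payoff V E ends len n (x(i := Ip e (pos w e b \<epsilon>))) i \<le> payoff V E ends len n x i"
      using nash i by (auto simp: nash_def)
    moreover have "min (Aal x ?J w e b) (sl w e b - \<epsilon>/2) \<le> payoff V E ends len n (x(i := Ip e (pos w e b \<epsilon>))) i"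
      using Dev[OF i vx vw dw ok] e by auto
    ultimately show "min (Aal x ?J w e b) (sl w e b - \<epsilon>/2) \<le> payoff V E ends len n x i" by linarith
  next
    show "0 < min (sl w e b) (2 * Aal x ?J w e b)" using Apos DF(1)[OF vw dw] by auto
    show "Aal x ?J w e b \<le> sl w e b" by fact
  qed
qed

end

context net begin

lemma vdeg_ge1: "e \<in> E \<Longrightarrow> inc e z \<Longrightarrow> 1 \<le> vdeg E ends z"
proof -
  assume "e \<in> E" "inc e z"
  then have "e \<in> {e\<in>E. z = fst (ends e) \<or> z = snd (ends e)}" by (auto simp: inc_def)
  moreover have "finite {e\<in>E. z = fst (ends e) \<or> z = snd (ends e)}" using finE by simp
  ultimately show ?thesis unfolding vdeg_def by (metis One_nat_def Suc_leI card_gt_0_iff empty_iff)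
qed

lemma dok_vp:
  fixes x :: "nat \<Rightarrow> ('v,'e) point"
  assumes vp: "vertex_property V E ends n x" and vw: "valid_pt V E len w" and d: "(e1, b1) \<in> dirs E ends w"
  shows "vdeg E ends (farv ends e1 b1) = 1 \<or> Vx (farv ends e1 b1) \<in> {x j | j. j < n}"
proof -
  have "1 \<le> vdeg E ends (farv ends e1 b1)" using vdeg_ge1[OF eE[OF vw d] DF(7)[OF vw d]] .
  moreover have "vdeg E ends (farv ends e1 b1) \<noteq> 2" using netw DF(5)[OF vw d] by (auto simp: network_def)
  moreover have "3 \<le> vdeg E ends (farv ends e1 b1) \<Longrightarrow> Vx (farv ends e1 b1) \<in> {x j | j. j < n}"
    using vp DF(5)[OF vw d] unfolding vertex_property_def by force
  ultimately show ?thesis by linarith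
qed

lemma not_seg_self: "valid_pt V E len w \<Longrightarrow> (e, b) \<in> dirs E ends w \<Longrightarrow> \<not> on_seg ends len w e b w"
proof (cases w)
  case (Vx v)
  assume vw: "valid_pt V E len w" and d: "(e, b) \<in> dirs E ends w"
  then show ?thesis using DF_Vx'[OF vw d Vx] DF(4)[OF vw d] Vx by (auto simp: on_seg_def)
next
  case (Ip e' t)
  assume vw: "valid_pt V E len w" and d: "(e, b) \<in> dirs E ends w"
  then show ?thesis using DF_Ip[OF vw d Ip] Ip by (auto simp: on_seg_def)
qed

lemma Aal_cong: "{j \<in> J. on_seg ends len w e b (x j)} = {j \<in> J'. on_seg ends len w e b (x j)} \<Longrightarrow>
   Aal x J w e b = Aal x J' w e b"
  by (simp add: Aal_def)

lemma local_eq: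
  fixes x :: "nat \<Rightarrow> ('v,'e) point"
  assumes nash: "nash V E ends len n x" and vp: "vertex_property V E ends n x"
    and i: "i < n" and sat: "saturated V E ends len n x (x i)"
    and d: "(e, b) \<in> dirs E ends (x i)"
  shows "Aal x {..<n} (x i) e b = payoff V E ends len n x i"
proof -
  let ?w = "x i" and ?\<pi> = "payoff V E ends len n x i"
  let ?A = "\<lambda>eb. Aal x {..<n} ?w (fst eb) (snd eb)"
  have vx: "\<And>j. j < n \<Longrightarrow> valid_pt V E len (x j)" using nash by (auto simp: nash_def)
  have vw: "valid_pt V E len ?w" using vx i by auto
  have dok: "\<And>e1 b1. (e1, b1) \<in> dirs E ends ?w \<Longrightarrow>
      vdeg E ends (farv ends e1 b1) = 1 \<or> Vx (farv ends e1 b1) \<in> {x j | j. j < n}"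
    using dok_vp[OF vp vw] by blast
  have le: "?A eb \<le> ?\<pi>" if eb: "eb \<in> dirs E ends ?w" for eb
  proof -
    obtain e1 b1 where eb': "eb = (e1, b1)" by (cases eb)
    have d1: "(e1, b1) \<in> dirs E ends ?w" using eb eb' by simp
    have seteq: "{j \<in> {..<n} - {i}. on_seg ends len ?w e1 b1 (x j)} = {j \<in> {..<n}. on_seg ends len ?w e1 b1 (x j)}"
      using not_seg_self[OF vw d1] by auto
    have "vdeg E ends (farv ends e1 b1) = 1 \<or> {j \<in> {..<n}. on_seg ends len ?w e1 b1 (x j)} \<noteq> {}"
    proof -
      have "{x j | j. j \<in> {..<n}} = {x j | j. j < n}" by simp
      then show ?thesis using okd_of_dok[of e1 b1 x "{..<n}" ?w] dok[OF d1] by simp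
    qed
    then have ok: "vdeg E ends (farv ends e1 b1) = 1 \<or> {j \<in> {..<n} - {i}. on_seg ends len ?w e1 b1 (x j)} \<noteq> {}"
      using seteq by simp
    have "Aal x ({..<n} - {i}) ?w e1 b1 \<le> ?\<pi>" using DevBound[OF nash i vw d1 ok] .
    moreover have "Aal x ({..<n} - {i}) ?w e1 b1 = Aal x {..<n} ?w e1 b1" using Aal_cong[OF seteq] .
    ultimately show ?thesis using eb' by simp
  qed
  have up: "?\<pi> \<le> (1 / real (card {j. j < n \<and> x j = ?w})) * (\<Sum>eb \<in> dirs E ends ?w. ?A eb)"
    using payoff_upper[OF i vx dok] .
  have k: "card {j. j < n \<and> x j = ?w} = card (dirs E ends ?w)"
    using sat card_dirs[OF vw] by (simp add: saturated_def)
  have kpos: "0 < card (dirs E ends ?w)" using d finite_dirs by (auto simp: card_gt_0_iff)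
  have "real (card (dirs E ends ?w)) * ?\<pi> \<le> (\<Sum>eb \<in> dirs E ends ?w. ?A eb)"
    using up k kpos by (simp add: field_simps)
  then have "(\<Sum>eb \<in> dirs E ends ?w. ?\<pi> - ?A eb) \<le> 0" by (simp add: sum_subtractf)
  moreover have "\<forall>eb \<in> dirs E ends ?w. 0 \<le> ?\<pi> - ?A eb" using le by auto
  ultimately have "\<forall>eb \<in> dirs E ends ?w. ?\<pi> - ?A eb = 0"
    using sum_nonneg_eq_0_iff[OF finite_dirs] by (metis (no_types, lifting) antisym sum_nonneg)
  then show ?thesis using d by force
qed

end

context net begin

lemma pd_le_along:
  assumes vw: "valid_pt V E len w" and d: "(e, b) \<in> dirs E ends w"
    and vq: "valid_pt V E len q" and sq: "on_seg ends len w e b q"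
  shows "pd w q \<le> alongd w e b q"
proof -
  have q: "q = Vx (farv ends e b) \<or> (\<exists>u. q = Ip e u \<and> 0 < sgd w e b u)" using on_seg_iff[OF vw d vq] sq by auto
  show ?thesis
  proof (cases w)
    case (Vx v)
    have vz: "v = farv ends e (\<not> b)" "nl w e b = 0" using DF_Vx'[OF vw d Vx] by auto
    have slen: "sl w e b = len e" using DF(3)[OF vw d] vz by simp
    from q show ?thesis
    proof
      assume qz: "q = Vx (farv ends e b)"
      have "dv v (farv ends e b) \<le> len e" using dV_edge[OF eE[OF vw d]] ends_z[OF vw d] vz by auto
      then show ?thesis using qz Vx slen by (simp add: pd_Vx Dq_def alongd_def)
    next
      assume "\<exists>u. q = Ip e u \<and> 0 < sgd w e b u"
      then obtain u where u: "q = Ip e u" by auto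
      have "Dq v (Ip e u) \<le> dv v v + (nl w e b + sgd w e b u)"
        using Dq_same[OF vw d, of v u] vz by simp
      then show ?thesis using u Vx vz dV_refl DF(6)[OF vw d] by (simp add: pd_Vx alongd_def)
    qed
  next
    case (Ip e' t)
    have et: "e' = e" "coord ends len w e = t" using DF_Ip[OF vw d Ip] by auto
    have wp: "w = Ip e (pos w e b 0)" using Ip et by (simp add: pos_def)
    from q show ?thesis
    proof
      assume qz: "q = Vx (farv ends e b)"
      have "pd (Ip e (pos w e b 0)) q \<le> sl w e b - 0 + Dq (farv ends e b) q" by (rule PT_le2[OF vw d])
      then show ?thesis using qz wp dV_refl DF(5)[OF vw d] by (simp add: Dq_def alongd_def)
    next
      assume "\<exists>u. q = Ip e u \<and> 0 < sgd w e b u"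
      then obtain u where u: "q = Ip e u" "0 < sgd w e b u" by auto
      have "pd (Ip e (pos w e b 0)) (Ip e u) \<le> \<bar>0 - sgd w e b u\<bar>" by (rule PT_le3[OF vw d])
      then show ?thesis using u wp by (simp add: alongd_def)
    qed
  qed
qed


lemma LB:
  fixes x :: "nat \<Rightarrow> ('v,'e) point"
  assumes vp: "vertex_property V E ends n x" and vx: "\<And>j. j < n \<Longrightarrow> valid_pt V E len (x j)"
    and i: "i < n"
    and allA: "\<And>e b. (e, b) \<in> dirs E ends (x i) \<Longrightarrow> Aal x {..<n} (x i) e b = \<pi>"
    and j: "j < n" "x j \<noteq> x i"
  shows "2 * \<pi> \<le> pd (x i) (x j)"
proof -
  let ?w = "x i" and ?q = "x j"
  let ?P = "\<lambda>e b. {j \<in> {..<n}. on_seg ends len ?w e b (x j)}"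
  have vw: "valid_pt V E len ?w" using vx i by auto
  have vq: "valid_pt V E len ?q" using vx j by auto
  have vx': "\<And>j. j \<in> {..<n} \<Longrightarrow> valid_pt V E len (x j)" using vx by auto
  have ok: "vdeg E ends (farv ends e b) = 1 \<or> ?P e b \<noteq> {}" if d: "(e, b) \<in> dirs E ends ?w" for e b
  proof -
    have "{x j | j. j \<in> {..<n}} = {x j | j. j < n}" by simp
    then show ?thesis using okd_of_dok[of e b x "{..<n}" ?w] dok_vp[OF vp vw d] by simp
  qed
  have Fne: "2 * \<pi> \<le> sl ?w e b \<and> (\<forall>j'. j' < n \<longrightarrow> on_seg ends len ?w e b (x j') \<longrightarrow> 2 * \<pi> \<le> alongd ?w e b (x j'))"
    if d: "(e, b) \<in> dirs E ends ?w" and ne: "?P e b \<noteq> {}" for e b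
    using A_ne[OF vw d _ vx' ok[OF d] ne] allA[OF d] by auto
  have Fe: "sl ?w e b = \<pi> \<and> vdeg E ends (farv ends e b) = 1"
    if d: "(e, b) \<in> dirs E ends ?w" and em: "?P e b = {}" for e b
    using A_empty[OF vw d _ vx' ok[OF d] em] allA[OF d] by auto
  have pipos: "0 < \<pi>" if d: "(e, b) \<in> dirs E ends ?w" for e b
    using A_pos[OF vw d _ vx' ok[OF d]] allA[OF d] by auto
  show ?thesis
  proof (cases ?w)
    case (Ip e t0)
    have et: "e \<in> E" "0 < t0" "t0 < len e" using vw Ip by auto
    have dT: "(e, True) \<in> dirs E ends ?w" and dF: "(e, False) \<in> dirs E ends ?w" using Ip by (auto simp: dirs_def)
    have co: "coord ends len ?w e = t0" using Ip by (simp add: coord_def)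
    have trm: "2 * \<pi> \<le> (if b then len e - t0 else t0) + Dq (farv ends e b) ?q" for b
    proof -
      have d: "(e, b) \<in> dirs E ends ?w" using dT dF by (cases b) auto
      have sl: "sl ?w e b = (if b then len e - t0 else t0)" using co et by (auto simp: sl_def farc_def)
      show ?thesis
      proof (cases "?P e b = {}")
        case True
        then have "\<not> on_seg ends len ?w e b ?q" using j by auto
        then have "sl ?w e b \<le> Dq (farv ends e b) ?q" using leaf_Dq[OF vw d _ vq] Fe[OF d True] by auto
        then show ?thesis using Fe[OF d True] sl by linarith
      next
        case False
        have "0 \<le> Dq (farv ends e b) ?q" using Dq_nonneg DF(5)[OF vw d] vq by auto
        then show ?thesis using Fne[OF d False] sl by linarith
      qed
    qed
    have t1: "2 * \<pi> \<le> t0 + Dq (fst (ends e)) ?q" using trm[of False] by (simp add: farv_def)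
    have t2: "2 * \<pi> \<le> len e - t0 + Dq (snd (ends e)) ?q" using trm[of True] by (simp add: farv_def)
    have t3: "2 * \<pi> \<le> \<bar>t0 - s\<bar>" if qs: "?q = Ip e s" for s
    proof -
      have "s \<noteq> t0" using qs Ip j by auto
      define b where "b = (t0 < s)"
      have d: "(e, b) \<in> dirs E ends ?w" using dT dF by (cases b) auto
      have sg: "sgd ?w e b s = \<bar>t0 - s\<bar>" "0 < sgd ?w e b s" using co \<open>s \<noteq> t0\<close> by (auto simp: sgd_def b_def)
      have "on_seg ends len ?w e b ?q" using on_seg_iff[OF vw d vq] qs sg by auto
      then have "?P e b \<noteq> {}" using j by auto
      then have "2 * \<pi> \<le> alongd ?w e b ?q" using Fne[OF d] j \<open>on_seg ends len ?w e b ?q\<close> by auto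
      then show ?thesis using qs sg by (simp add: alongd_def)
    qed
    show ?thesis
    proof (cases ?q)
      case (Vx v) then show ?thesis using Ip t1 t2 by (simp add: pd_Ip Let_def)
    next
      case (Ip e' s)
      then show ?thesis using \<open>?w = Ip e t0\<close> t1 t2 t3 by (cases "e' = e") (simp_all add: pd_Ip Let_def)
    qed
  next
    case (Vx v)
    have v: "v \<in> V" using vw Vx by simp
    define leafE where "leafE = {farv ends e1 b1 | e1 b1. (e1, b1) \<in> dirs E ends ?w \<and> ?P e1 b1 = {}}"
    have C1: "2 * \<pi> \<le> dv v u" if u: "u \<in> V" "u \<noteq> v" "u \<notin> leafE" for u
    proof (rule dV_ge[OF v u(1)])
      fix l assume wl: "wk v l u"
      obtain e1 c l1 where e1: "e1 \<in> E" "ends e1 = (v, c) \<or> ends e1 = (c, v)" "wk c l1 u" "l = len e1 + l1"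
        using walk_first[OF wl u(2)[symmetric]] by blast
      have d1: "(e1, v = fst (ends e1)) \<in> dirs E ends ?w" and fc: "farv ends e1 (v = fst (ends e1)) = c"
        using farv_in_dirs_Vx[OF e1(1,2)] Vx by auto
      have sl1: "sl ?w e1 (v = fst (ends e1)) = len e1"
        using DF(3)[OF vw d1] DF_Vx'[OF vw d1 Vx] by simp
      have l1: "0 \<le> l1" using walk_nonneg[OF e1(3)] .
      show "2 * \<pi> \<le> l"
      proof (cases "?P e1 (v = fst (ends e1)) = {}")
        case False
        then show ?thesis using Fne[OF d1] sl1 e1(4) l1 by auto
      next
        case True
        then have cl: "c \<in> leafE" using d1 fc unfolding leafE_def by blast
        then have uc: "u \<noteq> c" using u by auto
        have vc: "vdeg E ends c = 1" using Fe[OF d1 True] fc by simp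
        have "ends e1 = (c, v) \<or> ends e1 = (v, c)" using e1(2) by auto
        then obtain l3 where "wk v l3 u" "l1 = len e1 + l3" using walk_from_leaf[OF vc e1(1) _ e1(3) uc] by blast
        then show ?thesis using walk_nonneg[of v l3 u] Fe[OF d1 True] sl1 e1(4) by auto
      qed
    qed
    have notleaf: "y \<notin> leafE" if y: "y \<in> V" "y \<noteq> v" and qy: "?q = Vx y \<or> (\<exists>e'' u''. ?q = Ip e'' u'' \<and> inc e'' y)" for y
    proof
      assume "y \<in> leafE"
      then obtain e1 b1 where d1: "(e1, b1) \<in> dirs E ends ?w" "?P e1 b1 = {}" "y = farv ends e1 b1"
        unfolding leafE_def by blast
      have vd: "vdeg E ends y = 1" using Fe[OF d1(1,2)] d1(3) by simp
      have "on_seg ends len ?w e1 b1 ?q"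
      proof -
        from qy show ?thesis
        proof
          assume "?q = Vx y" then show ?thesis using d1(3) by (simp add: on_seg_def)
        next
          assume "\<exists>e'' u''. ?q = Ip e'' u'' \<and> inc e'' y"
          then obtain e'' u'' where q'': "?q = Ip e'' u''" "inc e'' y" by blast
          have "e'' \<in> E" using vq q'' by simp
          then have "e'' = e1" using leaf_unique[OF vd eE[OF vw d1(1)] _ _ q''(2)] DF(7)[OF vw d1(1)] d1(3) by auto
          then have vq': "valid_pt V E len (Ip e1 u'')" using vq q'' by simp
          have "- nl ?w e1 b1 < sgd ?w e1 b1 u''" using sgd_ge[OF vw d1(1) vq'] .
          then have "0 < sgd ?w e1 b1 u''" using DF_Vx'[OF vw d1(1) Vx] by simp
          then show ?thesis using on_seg_iff[OF vw d1(1) vq] q'' \<open>e'' = e1\<close> by auto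
        qed
      qed
      then show False using d1(2) j by auto
    qed
    have anc: "2 * \<pi> \<le> dv v y + \<beta>"
      if y: "y \<in> V" and e'': "e'' \<in> E" "?q = Ip e'' u''" and yb: "(y = fst (ends e'') \<and> \<beta> = u'') \<or> (y = snd (ends e'') \<and> \<beta> = len e'' - u'')"
      for y e'' u'' \<beta>
    proof (cases "y = v")
      case True
      define b where "b = (v = fst (ends e''))"
      have inc: "inc e'' v" using yb True by (auto simp: inc_def)
      have d: "(e'', b) \<in> dirs E ends ?w" using Vx e''(1) inc by (auto simp: dirs_def inc_def b_def)
      have co: "coord ends len ?w e'' = (if b then 0 else len e'')" using Vx by (simp add: coord_def b_def)
      have sg: "sgd ?w e'' b u'' = \<beta>" using yb True co edge_facts(3)[OF e''(1)] by (auto simp: sgd_def b_def)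
      have "0 < \<beta>" using yb vq e'' by auto
      then have "on_seg ends len ?w e'' b ?q" using on_seg_iff[OF vw d vq] e''(2) sg by auto
      then have "2 * \<pi> \<le> alongd ?w e'' b ?q" using Fne[OF d] j by auto
      then show ?thesis using sg e''(2) True dV_refl[OF v] by (simp add: alongd_def)
    next
      case False
      have "y \<notin> leafE" using notleaf[OF y False] e'' yb by (auto simp: inc_def)
      then have "2 * \<pi> \<le> dv v y" using C1[OF y False] by simp
      moreover have "0 \<le> \<beta>" using yb vq e'' by auto
      ultimately show ?thesis by simp
    qed
    show ?thesis
    proof (cases ?q)
      case (Vx u)
      have u: "u \<in> V" using vq Vx by simp
      have "u \<noteq> v" using j Vx \<open>?w = Vx v\<close> by auto
      moreover have "u \<notin> leafE" using notleaf[OF u \<open>u \<noteq> v\<close>] Vx by auto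
      ultimately show ?thesis using C1[OF u] Vx \<open>?w = Vx v\<close> by (simp add: pd_Vx Dq_def)
    next
      case (Ip e'' u'')
      have e'': "e'' \<in> E" using vq Ip by simp
      have a1: "2 * \<pi> \<le> dv v (fst (ends e'')) + u''" using anc[OF edge_facts(1)[OF e''] e'' Ip] by auto
      have a2: "2 * \<pi> \<le> dv v (snd (ends e'')) + (len e'' - u'')" using anc[OF edge_facts(2)[OF e''] e'' Ip] by auto
      show ?thesis using a1 a2 Ip \<open>?w = Vx v\<close> by (simp add: pd_Vx Dq_def)
    qed
  qed
qed

end

context net begin

lemma delta_eq:
  fixes x :: "nat \<Rightarrow> ('v,'e) point"
  assumes nash: "nash V E ends len n x" and vp: "vertex_property V E ends n x"
    and i: "i < n" and sat: "saturated V E ends len n x (x i)"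
    and d: "(e, b) \<in> dirs E ends (x i)"
  shows "delta V E ends len n x (x i) (e, b) = payoff V E ends len n x i"
proof -
  let ?w = "x i" and ?\<pi> = "payoff V E ends len n x i"
  have vx: "\<And>j. j < n \<Longrightarrow> valid_pt V E len (x j)" using nash by (auto simp: nash_def)
  have vw: "valid_pt V E len ?w" using vx i by auto
  have vx': "\<And>j. j \<in> {..<n} \<Longrightarrow> valid_pt V E len (x j)" using vx by auto
  have allA: "\<And>e b. (e, b) \<in> dirs E ends ?w \<Longrightarrow> Aal x {..<n} ?w e b = ?\<pi>"
    using local_eq[OF nash vp i sat] by blast
  let ?P = "{j. j < n \<and> on_seg ends len ?w e b (x j)}"
  have Peq: "{j \<in> {..<n}. on_seg ends len ?w e b (x j)} = ?P" by auto
  have ok: "vdeg E ends (farv ends e b) = 1 \<or> {j \<in> {..<n}. on_seg ends len ?w e b (x j)} \<noteq> {}"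
  proof -
    have "{x j | j. j \<in> {..<n}} = {x j | j. j < n}" by simp
    then show ?thesis using okd_of_dok[of e b x "{..<n}" ?w] dok_vp[OF vp vw d] by simp
  qed
  show ?thesis
  proof (cases "vdeg E ends (farv ends e b) = 1 \<and> ?P = {}")
    case True
    then have "Aal x {..<n} ?w e b = sl ?w e b" using A_empty[OF vw d _ vx' ok] Peq by auto
    then show ?thesis using True allA[OF d] by (simp add: delta_def sl_def Let_def)
  next
    case False
    then have ne: "?P \<noteq> {}" using ok Peq by auto
    let ?S = "{pd ?w (x j) | j. j \<in> ?P}"
    have fS: "finite ?S" by simp
    have nS: "?S \<noteq> {}" using ne by auto
    have ge: "2 * ?\<pi> \<le> Min ?S"
    proof (subst Min_ge_iff[OF fS nS], intro ballI)
      fix a assume "a \<in> ?S"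
      then obtain j where j: "j < n" "on_seg ends len ?w e b (x j)" "a = pd ?w (x j)" by auto
      have "x j \<noteq> ?w" using j(2) not_seg_self[OF vw d] by auto
      then show "2 * ?\<pi> \<le> a" using LB[OF vp vx i allA j(1)] j(3) by auto
    qed
    obtain j0 where j0: "j0 \<in> {..<n}" "on_seg ends len ?w e b (x j0)" "alongd ?w e b (x j0) = 2 * Aal x {..<n} ?w e b"
      using A_ne(4)[OF vw d _ vx' ok] ne Peq by auto
    have "pd ?w (x j0) \<le> alongd ?w e b (x j0)" using pd_le_along[OF vw d vx'[OF j0(1)] j0(2)] .
    moreover have "pd ?w (x j0) \<in> ?S" using j0 by auto
    then have "Min ?S \<le> pd ?w (x j0)" by (rule Min_le[OF fS])
    ultimately have "Min ?S \<le> 2 * ?\<pi>" using j0(3) allA[OF d] by linarith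
    then have m: "Min ?S = 2 * ?\<pi>" using ge by simp
    note nc = False
    have "delta V E ends len n x ?w (e, b) = Min ?S / 2"
      by (simp only: delta_def Let_def prod.case if_not_P[OF nc])
    then show ?thesis using m by simp
  qed
qed

lemma global_le:
  fixes x :: "nat \<Rightarrow> ('v,'e) point"
  assumes nash: "nash V E ends len n x" and vp: "vertex_property V E ends n x"
    and i1: "i1 < n" and sat1: "saturated V E ends len n x (x i1)"
    and i2: "i2 < n" and sat2: "saturated V E ends len n x (x i2)"
  shows "payoff V E ends len n x i2 \<le> payoff V E ends len n x i1"
proof -
  let ?w = "x i2"
  have vx: "\<And>j. j < n \<Longrightarrow> valid_pt V E len (x j)" using nash by (auto simp: nash_def)
  have vw: "valid_pt V E len ?w" using vx i2 by auto
  have vx': "\<And>j. j \<in> {..<n} \<Longrightarrow> valid_pt V E len (x j)" using vx by auto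
  let ?J = "{..<n} - {i1}"
  have vxJ: "\<And>j. j \<in> ?J \<Longrightarrow> valid_pt V E len (x j)" using vx by auto
  have "card (dirs E ends ?w) = card {j. j < n \<and> x j = ?w}"
    using sat2 card_dirs[OF vw] by (simp add: saturated_def)
  moreover have "0 < card {j. j < n \<and> x j = ?w}" using i2 by (auto simp: card_gt_0_iff)
  ultimately have "0 < card (dirs E ends ?w)" by linarith
  then have "dirs E ends ?w \<noteq> {}" by (metis card.empty less_irrefl)
  then obtain e b where d: "(e, b) \<in> dirs E ends ?w" by auto
  have ok: "vdeg E ends (farv ends e b) = 1 \<or> {j \<in> {..<n}. on_seg ends len ?w e b (x j)} \<noteq> {}"
  proof -
    have "{x j | j. j \<in> {..<n}} = {x j | j. j < n}" by simp
    then show ?thesis using okd_of_dok[of e b x "{..<n}" ?w] dok_vp[OF vp vw d] by simp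
  qed
  have okJ: "vdeg E ends (farv ends e b) = 1 \<or> {j \<in> ?J. on_seg ends len ?w e b (x j)} \<noteq> {}"
  proof (cases "vdeg E ends (farv ends e b) = 1")
    case True then show ?thesis by simp
  next
    case False
    let ?z = "farv ends e b"
    obtain j where j: "j < n" "x j = Vx ?z" using dok_vp[OF vp vw d] False by auto
    have "\<exists>j'. j' < n \<and> j' \<noteq> i1 \<and> x j' = Vx ?z"
    proof (cases "j = i1")
      case False then show ?thesis using j by auto
    next
      case True
      have "1 \<le> vdeg E ends ?z" using vdeg_ge1[OF eE[OF vw d] DF(7)[OF vw d]] .
      moreover have "vdeg E ends ?z \<noteq> 2" using netw DF(5)[OF vw d] by (auto simp: network_def)
      ultimately have g3: "3 \<le> vdeg E ends ?z" using False by linarith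
      have "card {j. j < n \<and> x j = Vx ?z} = vdeg E ends ?z"
        using sat1 True j by (simp add: saturated_def)
      then have "2 \<le> card {j. j < n \<and> x j = Vx ?z}" using g3 by simp
      moreover have "card {j. j < n \<and> x j = Vx ?z} \<le> 1" if "{j. j < n \<and> x j = Vx ?z} \<subseteq> {i1}"
        using card_mono[OF _ that] by simp
      ultimately have "\<not> {j. j < n \<and> x j = Vx ?z} \<subseteq> {i1}" by linarith
      then show ?thesis by auto
    qed
    then obtain j' where "j' < n" "j' \<noteq> i1" "x j' = Vx ?z" by blast
    then have "j' \<in> {j \<in> ?J. on_seg ends len ?w e b (x j)}" by (simp add: on_seg_def)
    then show ?thesis by blast
  qed
  have "Aal x ?J ?w e b \<le> payoff V E ends len n x i1" using DevBound[OF nash i1 vw d okJ] .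
  moreover have "Aal x {..<n} ?w e b \<le> Aal x ?J ?w e b"
  proof (cases "{j \<in> ?J. on_seg ends len ?w e b (x j)} = {}")
    case True
    then show ?thesis using A_empty[OF vw d _ vxJ okJ] A_le[OF vw d _ vx' ok] by auto
  next
    case False
    obtain j0 where j0: "j0 \<in> ?J" "on_seg ends len ?w e b (x j0)" "alongd ?w e b (x j0) = 2 * Aal x ?J ?w e b"
      using A_ne(4)[OF vw d _ vxJ okJ False] by auto
    have ne: "{j \<in> {..<n}. on_seg ends len ?w e b (x j)} \<noteq> {}" using j0 by auto
    have "j0 \<in> {..<n}" using j0(1) by auto
    then have "2 * Aal x {..<n} ?w e b \<le> alongd ?w e b (x j0)" using A_ne(3)[OF vw d _ vx' ok ne, of j0] j0(2) by simp
    then show ?thesis using j0(3) by simp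
  qed
  moreover have "Aal x {..<n} ?w e b = payoff V E ends len n x i2" using local_eq[OF nash vp i2 sat2 d] .
  ultimately show ?thesis by linarith
qed

end

theorem mainTheorem9:
  fixes V :: "'v set" and E :: "'e set" and ends :: "'e \<Rightarrow> 'v \<times> 'v" and len :: "'e \<Rightarrow> real"
    and n :: nat and x :: "nat \<Rightarrow> ('v,'e) point"
  assumes "network V E ends len"
    and "nash V E ends len n x"
    and "vertex_property V E ends n x"
  shows "\<exists>\<xi>>0. (\<forall>w. saturated V E ends len n x w \<longrightarrow>
                    (\<forall>eb\<in>dirs E ends w. delta V E ends len n x w eb = \<xi>)) \<and>
              (\<forall>i<n. saturated V E ends len n x (x i) \<longrightarrow> payoff V E ends len n x i = \<xi>)"
proof -
  interpret net V E ends len using assms(1) by unfold_locales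
  note nash = assms(2) and vp = assms(3)
  have vx: "\<And>j. j < n \<Longrightarrow> valid_pt V E len (x j)" using nash by (auto simp: nash_def)
  have occ: "\<exists>j. j < n \<and> x j = w \<and> saturated V E ends len n x (x j)"
    if sat: "saturated V E ends len n x w" and ne: "dirs E ends w \<noteq> {}" for w
  proof -
    have vw: "valid_pt V E len w" using sat by (simp add: saturated_def)
    have "card {j. j < n \<and> x j = w} = card (dirs E ends w)"
      using sat card_dirs[OF vw] by (simp add: saturated_def)
    moreover have "0 < card (dirs E ends w)" using ne finite_dirs by (simp add: card_gt_0_iff)
    ultimately have "{j. j < n \<and> x j = w} \<noteq> {}" by (metis card.empty less_irrefl)
    then show ?thesis using sat by auto
  qed
  show ?thesis
  proof (cases "\<exists>i0. i0 < n \<and> saturated V E ends len n x (x i0)")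
    case False
    have "\<forall>w. saturated V E ends len n x w \<longrightarrow> (\<forall>eb\<in>dirs E ends w. delta V E ends len n x w eb = 1)"
      using occ False by blast
    then show ?thesis using False by (intro exI[of _ 1]) auto
  next
    case True
    then obtain i0 where i0: "i0 < n" "saturated V E ends len n x (x i0)" by blast
    let ?\<xi> = "payoff V E ends len n x i0"
    have same: "payoff V E ends len n x i = ?\<xi>" if "i < n" "saturated V E ends len n x (x i)" for i
      using global_le[OF nash vp i0 that] global_le[OF nash vp that i0] by linarith
    have vw0: "valid_pt V E len (x i0)" using vx i0 by auto
    have "card (dirs E ends (x i0)) = card {j. j < n \<and> x j = x i0}"
      using i0 card_dirs[OF vw0] by (simp add: saturated_def)
    moreover have "0 < card {j. j < n \<and> x j = x i0}" using i0 by (auto simp: card_gt_0_iff)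
    ultimately have "0 < card (dirs E ends (x i0))" by linarith
    then have "dirs E ends (x i0) \<noteq> {}" by (metis card.empty less_irrefl)
    then obtain eb where "eb \<in> dirs E ends (x i0)" by blast
    then obtain e b where d: "(e, b) \<in> dirs E ends (x i0)" by (cases eb) auto
    have vx': "\<And>j. j \<in> {..<n} \<Longrightarrow> valid_pt V E len (x j)" using vx by auto
    have ok: "vdeg E ends (farv ends e b) = 1 \<or> {j \<in> {..<n}. on_seg ends len (x i0) e b (x j)} \<noteq> {}"
    proof -
      have "{x j | j. j \<in> {..<n}} = {x j | j. j < n}" by simp
      then show ?thesis using okd_of_dok[of e b x "{..<n}" "x i0"] dok_vp[OF vp vw0 d] by simp
    qed
    have pos: "0 < ?\<xi>" using A_pos[OF vw0 d _ vx' ok] local_eq[OF nash vp i0 d] by simp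
    have c1: "\<forall>w. saturated V E ends len n x w \<longrightarrow> (\<forall>eb\<in>dirs E ends w. delta V E ends len n x w eb = ?\<xi>)"
    proof (intro allI impI ballI)
      fix w eb assume sat: "saturated V E ends len n x w" and eb: "eb \<in> dirs E ends w"
      obtain j where j: "j < n" "x j = w" "saturated V E ends len n x (x j)" using occ[OF sat] eb by blast
      obtain e1 b1 where eb': "eb = (e1, b1)" by (cases eb)
      have "delta V E ends len n x (x j) (e1, b1) = payoff V E ends len n x j"
        using delta_eq[OF nash vp j(1) j(3)] eb eb' j(2) by auto
      then show "delta V E ends len n x w eb = ?\<xi>" using same[OF j(1) j(3)] eb' j(2) by simp
    qed
    show ?thesis using pos c1 same by blast
  qed
qed


end
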